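(* In the setting described in the context, let $R$ be an $x$-portal and $\mathcal Q$ a non-empty set of $x$-portals, where each amoebot $u$ knows whether $\mathrm{portal}(u)=R$ and whether $\mathrm{portal}(u)\in\mathcal Q$. There is an algorithm in the reconfigurable circuit model (the election primitive) that within $O(1)$ rounds elects a single portal $R'\in\mathcal Q$, i.e., every amoebot $u$ learns whether $\mathrm{portal}(u)=R'$.
   Context: Geometric amoebot model with reconfigurable circuits: $G_\Delta=(V_\Delta,E_\Delta)$ is the infinite regular triangular grid graph; an amoebot structure is a finite set $X$ of grid nodes, each occupied by an anonymous constant-memory amoebot, with $G_X$ the induced subgraph, assumed connected. Each edge of $G_X$ is replaced by a constant number of external links with pins at both endpoints (labeling agreed by neighbors); each amoebot partitions its pins into partition sets; circuits are connected components of the graph on all partition sets joined by external links. In synchronous rounds every amoebot may update its state, change its partition and beep on partition sets; beeps are received at the start of the next round by all partition sets of the same circuit (without sender identity or count). Standing assumptions: $X$ has no holes (the subgraph induced by $V_\Delta\setminus X$ is connected), amoebots share compass orientation and chirality, and a unique leader is known. Grid edges are parallel to three axes $x$ (west–east), $y$, $z$. With $E_x$ the edges of $G_X$ parallel to $x$, the $x$-portals are the vertex sets of the connected components of $(X,E_x)$; $\mathrm{portal}(u)$ is the $x$-portal containing $u$. Two portals are adjacent if an edge of $G_X$ joins them; the $x$-portal graph $\mathcal P$ has the portals as vertices and joins adjacent portals; for hole-free $X$ it is a tree. The amoebots operate on the implicit portal graph, the spanning subgraph of $G_X$ with edge set $E_x$ together with the westernmost edge between each pair of adjacent $x$-portals.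 (Analogously for $y$- and $z$-portals.) *)

theory Defs
  imports Main
begin

type_synonym node = "int \<times> int"

text \<open>Axial coordinates. Direction 0 is east (the x-axis), directions are numbered
  counterclockwise (global compass and chirality); direction (d+3) mod 6 is opposite to d.\<close>
definition dir :: "nat \<Rightarrow> node" where
  "dir d = (case d mod 6 of 0 \<Rightarrow> (1,0) | Suc 0 \<Rightarrow> (0,1) | Suc (Suc 0) \<Rightarrow> (-1,1)
          | Suc (Suc (Suc 0)) \<Rightarrow> (-1,0) | Suc (Suc (Suc (Suc 0))) \<Rightarrow> (0,-1) | _ \<Rightarrow> (1,-1))"

definition nb :: "node \<Rightarrow> nat \<Rightarrow> node" where
  "nb u d = (fst u + fst (dir d), snd u + snd (dir d))"

definition grid_adj :: "node \<Rightarrow> node \<Rightarrow> bool" where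
  "grid_adj u v \<longleftrightarrow> (\<exists>d<6. v = nb u d)"

definition induced_connected :: "node set \<Rightarrow> bool" where
  "induced_connected S \<longleftrightarrow>
     (\<forall>u\<in>S. \<forall>v\<in>S. (u, v) \<in> {(a, b). a \<in> S \<and> b \<in> S \<and> grid_adj a b}\<^sup>*)"

definition hole_free :: "node set \<Rightarrow> bool" where
  "hole_free X \<longleftrightarrow> induced_connected (- X)"

definition x_edges :: "node set \<Rightarrow> (node \<times> node) set" where
  "x_edges X = {(u, v). u \<in> X \<and> v \<in> X \<and> (v = nb u 0 \<or> u = nb v 0)}"

definition portal :: "node set \<Rightarrow> node \<Rightarrow> node set" where
  "portal X u = {v. (u, v) \<in> (x_edges X)\<^sup>*}"

definition x_portals :: "node set \<Rightarrow> node set set" where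
  "x_portals X = portal X ` X"

text \<open>A pin is (d, i): the i-th external link (i < c) on the edge in direction d.
  Link i of u in direction d is joined to link i of the neighbour in the opposite
  direction (labelling agreed by neighbours).  A partition of the pins is given by a
  labelling lbl; pins with equal label form one partition set.  An amoebot beeps on
  the partition sets whose labels lie in its beep set.\<close>

type_synonym pin = "nat \<times> nat"

record algo =
  links :: nat
  states :: "nat set"
  init :: "(nat \<Rightarrow> bool) \<Rightarrow> bool \<Rightarrow> bool \<Rightarrow> bool \<Rightarrow> nat"
    \<comment> \<open>occupied neighbour directions, is leader, portal(u) = R, portal(u) in Q\<close>
  delta :: "nat \<Rightarrow> (pin \<Rightarrow> bool) \<Rightarrow> nat \<times> (pin \<Rightarrow> nat) \<times> nat set"
    \<comment> \<open>state, received beeps per pin \<mapsto> new state, partition, beeped partition sets\<close>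
  out_fn :: "nat \<Rightarrow> bool"

text \<open>Constant memory: finitely many states, closed under the transition function.\<close>
definition valid_algo :: "algo \<Rightarrow> bool" where
  "valid_algo A \<longleftrightarrow> finite (states A)
     \<and> (\<forall>nbr l r q. init A nbr l r q \<in> states A)
     \<and> (\<forall>s\<in>states A. \<forall>b. fst (delta A s b) \<in> states A)"

definition circ_edges :: "node set \<Rightarrow> nat \<Rightarrow> (node \<Rightarrow> pin \<Rightarrow> nat)
    \<Rightarrow> ((node \<times> nat) \<times> (node \<times> nat)) set" where
  "circ_edges X c lbl = {((u, lbl u (d, i)), (v, lbl v ((d + 3) mod 6, i))) | u v d i.
      u \<in> X \<and> v \<in> X \<and> d < 6 \<and> i < c \<and> v = nb u d}"

definition received :: "node set \<Rightarrow> nat \<Rightarrow> (node \<Rightarrow> pin \<Rightarrow> nat) \<Rightarrow> (node \<Rightarrow> nat set)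
    \<Rightarrow> node \<Rightarrow> pin \<Rightarrow> bool" where
  "received X c lbl bp u p \<longleftrightarrow>
     (\<exists>v\<in>X. \<exists>d i. d < 6 \<and> i < c \<and> lbl v (d, i) \<in> bp v \<and>
        ((u, lbl u p), (v, lbl v (d, i))) \<in> (circ_edges X c lbl)\<^sup>*)"

text \<open>Configuration after t rounds: states of all amoebots and the beeps they
  receive at the start of the next round.\<close>
fun run :: "algo \<Rightarrow> node set \<Rightarrow> node \<Rightarrow> (node \<Rightarrow> bool) \<Rightarrow> (node \<Rightarrow> bool) \<Rightarrow> nat
    \<Rightarrow> (node \<Rightarrow> nat) \<times> (node \<Rightarrow> pin \<Rightarrow> bool)" where
  "run A X ldr inR inQ 0 =
     ((\<lambda>u. init A (\<lambda>d. nb u d \<in> X) (u = ldr) (inR u) (inQ u)), (\<lambda>u p. False))"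
| "run A X ldr inR inQ (Suc t) =
     (let (s, b) = run A X ldr inR inQ t;
          act = (\<lambda>u. delta A (s u) (b u))
      in ((\<lambda>u. fst (act u)),
          received X (links A) (\<lambda>u. fst (snd (act u))) (\<lambda>u. snd (snd (act u)))))"

end

theory Submission
  imports Defs
begin


lemma walk:
  fixes E :: "('n \<times> 'n) set" and ho :: "'n \<Rightarrow> bool" and sc :: "'n \<Rightarrow> 'n"
  assumes fin: "finite Ns" and s0N: "s0 \<in> Ns" and scN: "\<And>n. n \<in> Ns \<Longrightarrow> ho n \<Longrightarrow> sc n \<in> Ns"
    and inj: "\<And>n m. n \<in> Ns \<Longrightarrow> m \<in> Ns \<Longrightarrow> ho n \<Longrightarrow> ho m \<Longrightarrow> sc n = sc m \<Longrightarrow> n = m"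
    and nopred: "\<And>n. n \<in> Ns \<Longrightarrow> ho n \<Longrightarrow> sc n \<noteq> s0"
    and efwd: "\<And>n. n \<in> Ns \<Longrightarrow> ho n \<Longrightarrow> (n, sc n) \<in> E"
    and echar: "\<And>n m. (n, m) \<in> E \<Longrightarrow> n \<in> Ns \<Longrightarrow>
        m \<in> Ns \<and> ((ho n \<and> m = sc n) \<or> (ho m \<and> n = sc m))"
  shows "\<exists>k. (\<forall>j<k. ho ((sc ^^ j) s0)) \<and> \<not> ho ((sc ^^ k) s0) \<and>
     (\<forall>j\<le>k. (sc ^^ j) s0 \<in> Ns) \<and>
     (\<forall>m. (s0, m) \<in> E\<^sup>* \<longleftrightarrow> (\<exists>j\<le>k. m = (sc ^^ j) s0))"
proof -
  define s where "s j = (sc ^^ j) s0" for j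
  have sSuc: "s (Suc j) = sc (s j)" for j unfolding s_def by simp
  have inN: "s j \<in> Ns" if "\<forall>i<j. ho (s i)" for j
    using that proof (induction j)
    case 0 then show ?case using s0N by (simp add: s_def)
  next
    case (Suc j) then show ?case using scN sSuc by auto
  qed
  have shift: "s i = s (i + d) \<Longrightarrow> \<forall>t<i + d. ho (s t) \<Longrightarrow> s 0 = s d" for i d
  proof (induction i)
    case 0 then show ?case by simp
  next
    case (Suc i)
    have "s (Suc i) = sc (s i)" "s (Suc i + d) = sc (s (i + d))" using sSuc by auto
    moreover have "ho (s i)" "ho (s (i + d))" using Suc.prems(2) by auto
    moreover have "s i \<in> Ns" "s (i + d) \<in> Ns" using inN Suc.prems(2) by auto
    ultimately have "s i = s (i + d)" using inj Suc.prems(1) by metis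
    then show ?case using Suc by auto
  qed
  have injs: "i = j" if "s i = s j" "\<forall>t<max i j. ho (s t)" for i j
  proof (rule ccontr)
    assume ne: "i \<noteq> j"
    { fix a b assume ab: "a < b" "s a = s b" "\<forall>t<b. ho (s t)"
      then obtain d where d: "b = a + d" "d > 0" by (metis less_imp_add_positive)
      then have "s 0 = s d" using shift[of a d] ab by auto
      moreover obtain d' where "d = Suc d'" using d by (cases d) auto
      moreover have "ho (s d')" "s d' \<in> Ns" using ab d \<open>d = Suc d'\<close> inN by auto
      ultimately have False using nopred sSuc s_def by (metis funpow_0)
    }
    note X = this
    show False
    proof (cases "i < j")
      case True then show False using X[of i j] that by (auto simp: max_def)
    next
      case False then have "j < i" using ne by simp
      then show False using X[of j i] that by (auto simp: max_def)
    qed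
  qed
  have ex: "\<exists>k. \<not> ho (s k)"
  proof (rule ccontr)
    assume "\<not> ?thesis"
    then have all: "ho (s t)" for t by blast
    then have "inj s" using injs unfolding inj_def by blast
    moreover have "range s \<subseteq> Ns" using inN all by blast
    ultimately have "finite (UNIV :: nat set)" using fin by (meson finite_imageD finite_subset)
    then show False by simp
  qed
  define k where "k = (LEAST k. \<not> ho (s k))"
  have k1: "\<not> ho (s k)" unfolding k_def using ex by (rule LeastI_ex)
  have k2: "\<forall>j<k. ho (s j)" unfolding k_def using not_less_Least by blast
  have kN: "\<forall>j\<le>k. s j \<in> Ns" using inN k2 by auto
  have reach: "(s0, s j) \<in> E\<^sup>*" if "j \<le> k" for j
    using that proof (induction j)
    case 0 then show ?case by (simp add: s_def)
  next
    case (Suc j)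
    then have "ho (s j)" "s j \<in> Ns" using k2 kN by auto
    then have "(s j, s (Suc j)) \<in> E" using efwd sSuc by auto
    then show ?case using Suc by (meson Suc_leD rtrancl.rtrancl_into_rtrancl)
  qed
  have closed: "\<exists>j\<le>k. m = s j" if "(s0, m) \<in> E\<^sup>*" for m
    using that proof (induction rule: rtrancl_induct)
    case base then show ?case by (auto simp: s_def intro: exI[of _ 0])
  next
    case (step m m')
    then obtain j where j: "j \<le> k" "m = s j" by blast
    then have mN: "m \<in> Ns" using kN by blast
    from echar[OF step(2) mN] have m'N: "m' \<in> Ns" and
      c: "(ho m \<and> m' = sc m) \<or> (ho m' \<and> m = sc m')" by auto
    from c show ?case
    proof
      assume "ho m \<and> m' = sc m"
      then have "j < k" using j k1 by (cases "j = k") auto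
      then show ?thesis using \<open>ho m \<and> m' = sc m\<close> j sSuc by (metis Suc_leI)
    next
      assume h: "ho m' \<and> m = sc m'"
      show ?thesis
      proof (cases j)
        case 0
        then have "m = s0" using j by (simp add: s_def)
        then show ?thesis using h nopred m'N by blast
      next
        case (Suc j')
        then have "ho (s j')" "s j' \<in> Ns" using j k2 kN by auto
        moreover have "sc (s j') = sc m'" using h j Suc sSuc by simp
        ultimately have "m' = s j'" using inj h m'N by metis
        then show ?thesis using Suc j by (intro exI[of _ j']) auto
      qed
    qed
  qed
  show ?thesis
    apply (rule exI[of _ k])
    using k1 k2 kN reach closed unfolding s_def by blast
qed


declare One_nat_def [simp del]


lemma lt6: "(d::nat) < 6 \<Longrightarrow> d = 0 \<or> d = 1 \<or> d = 2 \<or> d = 3 \<or> d = 4 \<or> d = 5" by auto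

lemma dir0: "dir 0 = (1,0)" by (simp add: dir_def)
lemma dir1: "dir 1 = (0,1)"
proof - have "(1::nat) mod 6 = Suc 0" by simp
  then show ?thesis unfolding dir_def by (simp only:) simp qed
lemma dir2: "dir 2 = (-1,1)"
proof - have "(2::nat) mod 6 = Suc (Suc 0)" by simp
  then show ?thesis unfolding dir_def by (simp only:) simp qed
lemma dir3: "dir 3 = (-1,0)"
proof - have "(3::nat) mod 6 = Suc (Suc (Suc 0))" by simp
  then show ?thesis unfolding dir_def by (simp only:) simp qed
lemma dir4: "dir 4 = (0,-1)"
proof - have "(4::nat) mod 6 = Suc (Suc (Suc (Suc 0)))" by simp
  then show ?thesis unfolding dir_def by (simp only:) simp qed
lemma dir5: "dir 5 = (1,-1)"
proof - have "(5::nat) mod 6 = Suc (Suc (Suc (Suc (Suc 0))))" by simp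
  then show ?thesis unfolding dir_def by (simp only:) simp qed
lemma suc_num: "Suc 0 = 1" "Suc (Suc 0) = 2" "Suc (Suc (Suc 0)) = 3" "Suc (Suc (Suc (Suc 0))) = 4"
  "Suc (Suc (Suc (Suc (Suc 0)))) = 5" by simp_all
lemmas dirs = dir0 dir1 dir2 dir3 dir4 dir5

lemma dir_mod: "dir (d mod 6) = dir d" by (simp add: dir_def)
lemma nb_mod: "nb u (d mod 6) = nb u d" by (simp add: nb_def dir_mod)

lemma nbs: "nb u 0 = (fst u + 1, snd u)" "nb u 1 = (fst u, snd u + 1)" "nb u 2 = (fst u - 1, snd u + 1)"
  "nb u 3 = (fst u - 1, snd u)" "nb u 4 = (fst u, snd u - 1)" "nb u 5 = (fst u + 1, snd u - 1)"
  by (simp_all add: nb_def dirs)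

lemma G1: "d < 6 \<Longrightarrow> nb (nb u d) ((d+3) mod 6) = u"
  by (elim lt6[elim_format] disjE) (simp_all add: nbs suc_num)
lemma G2: "d < 6 \<Longrightarrow> nb (nb u d) ((d+4) mod 6) = nb u ((d+5) mod 6)"
  by (elim lt6[elim_format] disjE) (simp_all add: nbs suc_num)
lemma G3: "d < 6 \<Longrightarrow> nb (nb u d) ((d+2) mod 6) = nb u ((d+1) mod 6)"
  by (elim lt6[elim_format] disjE) (simp_all add: nbs suc_num)
lemma G4: "d < 6 \<Longrightarrow> d' < 6 \<Longrightarrow> nb u d = nb u d' \<Longrightarrow> d = d'"
  by (elim lt6[elim_format] disjE) (simp_all add: nbs suc_num prod_eq_iff)
lemma G5: "nb u d \<noteq> u"
proof -
  have "d mod 6 < 6" by simp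
  then have "nb u (d mod 6) \<noteq> u" by (elim lt6[elim_format] disjE) (simp_all add: nbs suc_num prod_eq_iff)
  then show ?thesis by (simp add: nb_mod)
qed
lemma grid_adj_nb: "grid_adj u v \<longleftrightarrow> (\<exists>d<6. v = nb u d)" by (simp add: grid_adj_def)
lemma grid_adj_sym: "grid_adj u v \<Longrightarrow> grid_adj v u"
proof -
  assume "grid_adj u v"
  then obtain d where d: "d < 6" "v = nb u d" by (auto simp: grid_adj_def)
  then have "u = nb v ((d+3) mod 6)" using G1 by simp
  moreover have "(d+3) mod 6 < 6" by simp
  ultimately show ?thesis unfolding grid_adj_def by blast
qed


lemma G6: "b < 6 \<Longrightarrow> c < 6 \<Longrightarrow> d < 6 \<Longrightarrow> nb (nb u b) d = nb u c \<Longrightarrow>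
    c = (b+5) mod 6 \<or> c = (b+1) mod 6"
  by (elim lt6[elim_format] disjE) (simp_all add: nbs suc_num prod_eq_iff)


fun sc :: "(nat \<Rightarrow> bool) \<Rightarrow> nat list \<Rightarrow> nat" where
  "sc oc [] = 0"
| "sc oc [x] = x"
| "sc oc (x # xs) = (if oc x then x else sc oc xs)"

definition exl :: "nat \<Rightarrow> nat list" where
  "exl d = (if d = 0 then [0,1,2,3,4,5] else if d = 1 then [1,2,3,4,5,0]
    else if d = 2 then [2,3,4,5,0,1] else if d = 3 then [3,4,5,0,1,2]
    else if d = 4 then [4,5,0,1,2,3] else [5,0,1,2,3,4])"

definition enl :: "nat \<Rightarrow> nat list" where
  "enl d = (if d = 0 then [5,4,3,2,1,0] else if d = 1 then [0,5,4,3,2,1]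
    else if d = 2 then [1,0,5,4,3,2] else if d = 3 then [2,1,0,5,4,3]
    else if d = 4 then [3,2,1,0,5,4] else [4,3,2,1,0,5])"

text \<open>exitd: first occupied direction scanning counterclockwise from d (inclusive);
  entd: first occupied direction scanning clockwise from d - 1.\<close>
definition exitd :: "(nat \<Rightarrow> bool) \<Rightarrow> nat \<Rightarrow> nat" where
  "exitd oc d = sc oc (exl (d mod 6))"
definition entd :: "(nat \<Rightarrow> bool) \<Rightarrow> nat \<Rightarrow> nat" where
  "entd oc d = sc oc (enl (d mod 6))"

definition noniso :: "(nat \<Rightarrow> bool) \<Rightarrow> bool" where
  "noniso oc \<longleftrightarrow> oc 0 \<or> oc 1 \<or> oc 2 \<or> oc 3 \<or> oc 4 \<or> oc 5"


lemma exitd_lt: "exitd oc d < 6"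
proof -
  have "d mod 6 < 6" by simp
  then show ?thesis unfolding exitd_def by (elim lt6[elim_format] disjE) (simp_all add: exl_def)
qed

lemma entd_lt: "entd oc d < 6"
proof -
  have "d mod 6 < 6" by simp
  then show ?thesis unfolding entd_def by (elim lt6[elim_format] disjE) (simp_all add: enl_def)
qed

lemma E2: "d < 6 \<Longrightarrow> oc d \<Longrightarrow> exitd oc d = d"
  by (elim lt6[elim_format] disjE) (simp_all add: exitd_def exl_def)

lemma E1: "d < 6 \<Longrightarrow> \<not> oc d \<Longrightarrow> noniso oc \<Longrightarrow> exitd oc ((d+1) mod 6) = exitd oc d"
  by (elim lt6[elim_format] disjE) (auto simp add: exitd_def exl_def noniso_def)

lemma E2': "d < 6 \<Longrightarrow> oc ((d+5) mod 6) \<Longrightarrow> entd oc d = (d+5) mod 6"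
  by (elim lt6[elim_format] disjE) (simp_all add: entd_def enl_def)

lemma E1': "d < 6 \<Longrightarrow> \<not> oc ((d+5) mod 6) \<Longrightarrow> noniso oc \<Longrightarrow> entd oc ((d+5) mod 6) = entd oc d"
  by (elim lt6[elim_format] disjE) (auto simp add: entd_def enl_def noniso_def)

lemma F5: "d < 6 \<Longrightarrow> \<not> oc d \<Longrightarrow> noniso oc \<Longrightarrow>
   oc (exitd oc d) \<and> \<not> oc ((exitd oc d + 5) mod 6) \<and> entd oc (exitd oc d) = entd oc d"
  by (elim lt6[elim_format] disjE) (auto simp add: exitd_def exl_def entd_def enl_def noniso_def)


definition gl :: "nat \<Rightarrow> nat \<Rightarrow> nat \<Rightarrow> nat" where "gl a b p = 2 * (6 * a + b) + p"
definition gv :: "(nat \<Rightarrow> bool) \<Rightarrow> nat \<Rightarrow> bool" where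
  "gv oc b \<longleftrightarrow> b < 6 \<and> oc b \<and> \<not> oc ((b+5) mod 6)"
definition ev :: "(nat \<Rightarrow> bool) \<Rightarrow> nat \<Rightarrow> bool" where
  "ev oc a \<longleftrightarrow> a < 6 \<and> oc a \<and> \<not> oc ((a+1) mod 6)"
definition xl :: "nat \<Rightarrow> nat" where "xl d = (if 3 \<le> d then 1 else 0)"
definition nl :: "nat \<Rightarrow> nat" where "nl d = (if d < 3 then 1 else 0)"
definition iscut :: "(nat \<Rightarrow> bool) \<Rightarrow> bool \<Rightarrow> nat \<Rightarrow> bool" where
  "iscut oc k a \<longleftrightarrow> k \<and> \<not> oc 3 \<and> exitd oc ((a+1) mod 6) = exitd oc 3"
definition entlab :: "(nat \<Rightarrow> bool) \<Rightarrow> bool \<Rightarrow> nat \<Rightarrow> nat" where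
  "entlab oc k a = gl a (exitd oc ((a+1) mod 6)) (if iscut oc k a then 0 else 1)"
definition exlab :: "(nat \<Rightarrow> bool) \<Rightarrow> nat \<Rightarrow> nat" where
  "exlab oc b = gl (entd oc b) b 1"
definition lab1 :: "(nat \<Rightarrow> bool) \<Rightarrow> bool \<Rightarrow> pin \<Rightarrow> nat" where
  "lab1 oc k p = (if fst p < 6 \<and> snd p = xl (fst p) \<and> gv oc (fst p) then exlab oc (fst p)
     else if fst p < 6 \<and> snd p = nl (fst p) \<and> ev oc (fst p) then entlab oc k (fst p) else 100)"
definition pn :: "(nat \<Rightarrow> bool) \<Rightarrow> nat \<Rightarrow> nat" where
  "pn oc d = gl (entd oc d) (exitd oc d) 1"

lemma gl_div2: "p < 2 \<Longrightarrow> gl a b p div 2 = 6*a+b" unfolding gl_def by simp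
lemma gl_mod2: "p < 2 \<Longrightarrow> gl a b p mod 2 = p" unfolding gl_def by presburger
lemma gl_lt: "a < 6 \<Longrightarrow> b < 6 \<Longrightarrow> p < 2 \<Longrightarrow> gl a b p < 72"
proof -
  assume "a < 6" "b < 6" "p < 2"
  then have "6 * a \<le> 30" by simp
  moreover have "2 * (6 * a + b) + p = 2 * (6 * a) + 2 * b + p" by simp
  ultimately show ?thesis using \<open>b < 6\<close> \<open>p < 2\<close> unfolding gl_def by linarith
qed
lemma gl_b: "b < 6 \<Longrightarrow> p < 2 \<Longrightarrow> (gl a b p div 2) mod 6 = b" by (simp add: gl_div2)
lemma gl_inj: "b < 6 \<Longrightarrow> b' < 6 \<Longrightarrow> p < 2 \<Longrightarrow> p' < 2 \<Longrightarrow> gl a b p = gl a' b' p' \<Longrightarrow>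
   a = a' \<and> b = b' \<and> p = p'"
proof -
  assume h: "b < 6" "b' < 6" "p < 2" "p' < 2" "gl a b p = gl a' b' p'"
  have "p = p'" using gl_mod2[of p a b] gl_mod2[of p' a' b'] h by simp
  moreover have e: "6*a+b = 6*a'+b'" using gl_div2[of p a b] gl_div2[of p' a' b'] h by simp
  moreover have "b = b'" using arg_cong[OF e, of "\<lambda>x. x mod 6"] h by simp
  moreover have "a = a'" using e \<open>b = b'\<close> by simp
  ultimately show ?thesis by simp
qed
lemma xl_nl: "xl d \<noteq> nl d" unfolding xl_def nl_def by auto
lemma xl_nl3: "d < 6 \<Longrightarrow> xl ((d+3) mod 6) = nl d \<and> nl ((d+3) mod 6) = xl d"
  by (elim lt6[elim_format] disjE) (simp_all add: xl_def nl_def)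
lemma xl_lt: "xl d < 2" "nl d < 2" unfolding xl_def nl_def by auto


lemma LL3: "\<not> oc 3 \<Longrightarrow> noniso oc \<Longrightarrow> ev oc (entd oc 3) \<and> exitd oc ((entd oc 3 + 1) mod 6) = exitd oc 3"
  by (cases "oc 0"; cases "oc 1"; cases "oc 2"; cases "oc 3"; cases "oc 4"; cases "oc 5"; simp add: exitd_def exl_def entd_def enl_def ev_def gv_def pn_def exlab_def noniso_def)

lemma CUTA: assumes "ev oc a" "noniso oc" "\<not> oc 3" "exitd oc ((a+1) mod 6) = exitd oc 3" shows "a = entd oc 3"
proof - have "a < 6" using assms(1) ev_def by simp
  then show ?thesis using assms by (elim lt6[elim_format] disjE; (cases "oc 0"; cases "oc 1"; cases "oc 2"; cases "oc 3"; cases "oc 4"; cases "oc 5"; simp add: exitd_def exl_def entd_def enl_def ev_def gv_def pn_def exlab_def noniso_def))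
qed

lemma PN1: assumes "gv oc b" "noniso oc" shows "pn oc ((b+5) mod 6) = exlab oc b"
proof - have "b < 6" using assms(1) gv_def by simp
  then show ?thesis using assms by (elim lt6[elim_format] disjE; (cases "oc 0"; cases "oc 1"; cases "oc 2"; cases "oc 3"; cases "oc 4"; cases "oc 5"; simp add: exitd_def exl_def entd_def enl_def ev_def gv_def pn_def exlab_def noniso_def))
qed

lemma PN2: assumes "ev oc a" "noniso oc" shows "pn oc ((a+1) mod 6) = gl a (exitd oc ((a+1) mod 6)) 1"
proof - have "a < 6" using assms(1) ev_def by simp
  then show ?thesis using assms by (elim lt6[elim_format] disjE; (cases "oc 0"; cases "oc 1"; cases "oc 2"; cases "oc 3"; cases "oc 4"; cases "oc 5"; simp add: exitd_def exl_def entd_def enl_def ev_def gv_def pn_def exlab_def noniso_def))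
qed

lemma PN3: assumes "d < 6" "\<not> oc d" "\<not> oc ((d+1) mod 6)" "noniso oc" shows "pn oc ((d+1) mod 6) = pn oc d"
  using assms(1) assms(2-) by (elim lt6[elim_format] disjE; (cases "oc 0"; cases "oc 1"; cases "oc 2"; cases "oc 3"; cases "oc 4"; cases "oc 5"; simp add: exitd_def exl_def entd_def enl_def ev_def gv_def pn_def exlab_def noniso_def))

lemma GVX: "\<not> oc 3 \<Longrightarrow> noniso oc \<Longrightarrow> gv oc (exitd oc 3) \<and> exlab oc (exitd oc 3) = gl (entd oc 3) (exitd oc 3) 1"
  by (cases "oc 0"; cases "oc 1"; cases "oc 2"; cases "oc 3"; cases "oc 4"; cases "oc 5"; simp add: exitd_def exl_def entd_def enl_def ev_def gv_def pn_def exlab_def noniso_def)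

lemma EVGV: assumes "ev oc a" "noniso oc" shows "gv oc (exitd oc ((a+1) mod 6)) \<and>
    exlab oc (exitd oc ((a+1) mod 6)) = gl a (exitd oc ((a+1) mod 6)) 1"
proof - have "a < 6" using assms(1) ev_def by simp
  then show ?thesis using assms by (elim lt6[elim_format] disjE; (cases "oc 0"; cases "oc 1"; cases "oc 2"; cases "oc 3"; cases "oc 4"; cases "oc 5"; simp add: exitd_def exl_def entd_def enl_def ev_def gv_def pn_def exlab_def noniso_def))
qed


lemma adjnb: "d < 6 \<Longrightarrow> grid_adj u (nb u d)" unfolding grid_adj_def by blast

lemma rel_conn_const:
  assumes "(u, v) \<in> {(a, b). a \<in> S \<and> b \<in> S \<and> grid_adj a b}\<^sup>*"
    and "\<And>a b. a \<in> S \<Longrightarrow> b \<in> S \<Longrightarrow> grid_adj a b \<Longrightarrow> f a = f b"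
  shows "f u = f v"
  using assms(1) by (induction rule: rtrancl_induct) (auto dest: assms(2))

lemma jordan:
  fixes X :: "node set" and C :: "(node \<times> node) set"
  assumes fin: "finite X" and cX: "induced_connected X" and cE: "induced_connected (- X)"
    and cl1: "\<And>u v e. u \<in> X \<Longrightarrow> v \<in> X \<Longrightarrow> e \<notin> X \<Longrightarrow> grid_adj u v \<Longrightarrow> grid_adj u e \<Longrightarrow>
               grid_adj v e \<Longrightarrow> ((u, e) \<in> C \<longleftrightarrow> (v, e) \<in> C)"
    and cl2: "\<And>u e e'. u \<in> X \<Longrightarrow> e \<notin> X \<Longrightarrow> e' \<notin> X \<Longrightarrow> grid_adj u e \<Longrightarrow> grid_adj u e' \<Longrightarrow>
               grid_adj e e' \<Longrightarrow> ((u, e) \<in> C \<longleftrightarrow> (u, e') \<in> C)"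
    and ne: "(u0, e0) \<in> C" "u0 \<in> X" "e0 \<notin> X" "grid_adj u0 e0"
    and u: "u \<in> X" "e \<notin> X" "grid_adj u e"
  shows "(u, e) \<in> C"
proof -
  define F where "F p q \<longleftrightarrow> (p \<in> X \<and> q \<notin> X \<and> (p, q) \<in> C) \<or> (q \<in> X \<and> p \<notin> X \<and> (q, p) \<in> C)"
    for p q
  have Fsym: "F p q = F q p" for p q unfolding F_def by blast
  have tri: "F p r = (F p q \<noteq> F q r)" if "grid_adj p q" "grid_adj q r" "grid_adj p r" for p q r
  proof -
    have a: "grid_adj q p" "grid_adj r q" "grid_adj r p" using that grid_adj_sym by auto
    show ?thesis
      using cl1[of p q r] cl1[of p r q] cl1[of q r p] cl2[of p q r] cl2[of q p r] cl2[of r p q] that a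
      unfolding F_def by blast
  qed
  obtain N where N: "\<And>c. c \<in> X \<Longrightarrow> fst c < N"
  proof -
    have "finite (fst ` X)" using fin by simp
    then obtain M where "\<forall>x\<in>fst ` X. x \<le> M" using finite_nat_set_iff_bounded_le
      by (meson bdd_above_def bdd_above_finite)
    then show ?thesis using that[of "M + 1"] by fastforce
  qed
  have outN: "c \<notin> X" if "fst c \<ge> N" for c
  proof
    assume "c \<in> X" then have "fst c < N" by (rule N)
    with that show False by simp
  qed
  define H where "H x y = F (x, y) (x + 1, y)" for x y
  define V where "V x y = F (x, y) (x, y + 1)" for x y
  define s where "s x y = odd (card {x'. x \<le> x' \<and> x' \<le> N \<and> H x' y})" for x y
  have FoutN: "\<not> F p q" if "fst p \<ge> N" "fst q \<ge> N" for p q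
    using outN[OF that(1)] outN[OF that(2)] unfolding F_def by blast
  have sH: "s x y = (H x y \<noteq> s (x + 1) y)" for x y
  proof (cases "x \<le> N")
    case True
    let ?A = "{x'. x + 1 \<le> x' \<and> x' \<le> N \<and> H x' y}"
    have fA: "finite ?A" by (rule finite_subset[of _ "{x+1..N}"]) auto
    have xA: "x \<notin> ?A" by simp
    show ?thesis
    proof (cases "H x y")
      case True
      then have eq: "{x'. x \<le> x' \<and> x' \<le> N \<and> H x' y} = insert x ?A" using \<open>x \<le> N\<close> by auto
      show ?thesis unfolding s_def eq using True fA xA by simp
    next
      case False
      have "x + 1 \<le> x'" if "x \<le> x'" "H x' y" for x' using False that by (cases "x' = x") auto
      then have eq: "{x'. x \<le> x' \<and> x' \<le> N \<and> H x' y} = ?A" by force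
      show ?thesis unfolding s_def eq using False by simp
    qed
  next
    case False
    then have h: "H x y = False" unfolding H_def using FoutN by simp
    have e1: "{x'. x \<le> x' \<and> x' \<le> N \<and> H x' y} = {}" and e2: "{x'. x + 1 \<le> x' \<and> x' \<le> N \<and> H x' y} = {}"
      using False by auto
    show ?thesis unfolding s_def e1 e2 h by simp
  qed
  have triA: "V x y = (H x y \<noteq> F (x + 1, y) (x, y + 1))" for x y
  proof -
    have "grid_adj (x, y) (x + 1, y)" "grid_adj (x + 1, y) (x, y + 1)" "grid_adj (x, y) (x, y + 1)"
      using adjnb[of 0 "(x,y)"] adjnb[of 2 "(x+1,y)"] adjnb[of 1 "(x,y)"] by (simp_all add: nbs)
    then show ?thesis using tri unfolding V_def H_def by blast
  qed
  have triB: "V (x + 1) y = (F (x + 1, y) (x, y + 1) \<noteq> H x (y + 1))" for x y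
  proof -
    have "grid_adj (x + 1, y) (x, y + 1)" "grid_adj (x, y + 1) (x + 1, y + 1)" "grid_adj (x + 1, y) (x + 1, y + 1)"
      using adjnb[of 2 "(x+1,y)"] adjnb[of 0 "(x,y+1)"] adjnb[of 1 "(x+1,y)"] by (simp_all add: nbs)
    then show ?thesis using tri unfolding V_def H_def by blast
  qed
  have sV0: "\<forall>x. x \<ge> N - int n \<longrightarrow> (s x y \<noteq> s x (y + 1)) = V x y" for n y
  proof (induction n)
    case 0
    have "s x y' = False" if "x \<ge> N" for x y'
    proof -
      have e: "{x'. x \<le> x' \<and> x' \<le> N \<and> H x' y'} = {}"
        using that FoutN unfolding H_def by fastforce
      show ?thesis unfolding s_def e by simp
    qed
    moreover have "V x y = False" if "x \<ge> N" for x using that FoutN unfolding V_def by simp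
    ultimately show ?case by simp
  next
    case (Suc n)
    show ?case
    proof (intro allI impI)
      fix x assume x: "N - int (Suc n) \<le> x"
      show "(s x y \<noteq> s x (y + 1)) = V x y"
      proof (cases "N - int n \<le> x")
        case True then show ?thesis using Suc by blast
      next
        case False
        then have "N - int n \<le> x + 1" using x by simp
        then have ih: "(s (x+1) y \<noteq> s (x+1) (y + 1)) = V (x+1) y" using Suc by blast
        show ?thesis using sH[of x y] sH[of x "y+1"] ih triA[of x y] triB[of x y] by blast
      qed
    qed
  qed
  have sV: "(s x y \<noteq> s x (y + 1)) = V x y" for x y
    using sV0[of "nat (N - x)" y] by simp
  define s' where "s' c = s (fst c) (snd c)" for c
  have adj: "(s' c \<noteq> s' c') = F c c'" if cc: "grid_adj c c'" for c c'
  proof -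
    obtain x y where c: "c = (x, y)" by fastforce
    obtain d where d: "d < 6" "c' = nb c d" using cc unfolding grid_adj_nb by blast
    have A: "F (x, y) (x + 1, y) = (s x y \<noteq> s (x+1) y)" using sH[of x y] unfolding H_def by blast
    have B: "F (x, y) (x, y + 1) = (s x y \<noteq> s x (y+1))" using sV[of x y] unfolding V_def by blast
    have A': "F (x, y) (x - 1, y) = (s x y \<noteq> s (x - 1) y)" using sH[of "x - 1" y] Fsym unfolding H_def by auto
    have B': "F (x, y) (x, y - 1) = (s x y \<noteq> s x (y - 1))" using sV[of x "y - 1"] Fsym unfolding V_def by auto
    have C2: "F (x, y) (x - 1, y + 1) = (s x y \<noteq> s (x - 1) (y + 1))"
      using triA[of "x - 1" y] sH[of "x - 1" y] sV[of "x - 1" y] unfolding H_def V_def by auto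
    have C5: "F (x, y) (x + 1, y - 1) = (s x y \<noteq> s (x + 1) (y - 1))"
      using triA[of x "y - 1"] sH[of x "y - 1"] sV[of x "y - 1"] Fsym unfolding H_def V_def by auto
    show ?thesis using d A B A' B' C2 C5 unfolding c s'_def
      by (elim lt6[elim_format] disjE) (simp_all add: nbs)
  qed
  have constX: "s' a = s' b" if "a \<in> X" "b \<in> X" for a b
  proof -
    have "(a, b) \<in> {(p, q). p \<in> X \<and> q \<in> X \<and> grid_adj p q}\<^sup>*" using cX that unfolding induced_connected_def by blast
    then show ?thesis
      by (rule rel_conn_const) (use adj F_def in blast)
  qed
  have constE: "s' a = s' b" if "a \<notin> X" "b \<notin> X" for a b
  proof -
    have "(a, b) \<in> {(p, q). p \<in> - X \<and> q \<in> - X \<and> grid_adj p q}\<^sup>*" using cE that unfolding induced_connected_def by blast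
    then show ?thesis
      by (rule rel_conn_const) (use adj F_def in blast)
  qed
  have F0: "F u0 e0" using ne unfolding F_def by blast
  have "s' u0 \<noteq> s' e0" using adj[OF ne(4)] F0 by blast
  then have "s' u \<noteq> s' e" using constX[OF u(1) ne(2)] constE[OF u(2) ne(3)] by simp
  then have "F u e" using adj[OF u(3)] by blast
  then show ?thesis using u unfolding F_def by blast
qed


definition occ :: "node set \<Rightarrow> node \<Rightarrow> nat \<Rightarrow> bool" where
  "occ X u d = (nb u d \<in> X)"

definition Lb :: "node set \<Rightarrow> (node \<Rightarrow> bool) \<Rightarrow> node \<Rightarrow> pin \<Rightarrow> nat" where
  "Lb X K u p = lab1 (occ X u) (K u) p"
definition hoN :: "node set \<Rightarrow> node \<times> nat \<Rightarrow> bool" where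
  "hoN X n \<longleftrightarrow> fst n \<in> X \<and> (\<exists>b. gv (occ X (fst n)) b \<and> snd n = exlab (occ X (fst n)) b)"
definition scN :: "node set \<Rightarrow> (node \<Rightarrow> bool) \<Rightarrow> node \<times> nat \<Rightarrow> node \<times> nat" where
  "scN X K n = (let b = (snd n div 2) mod 6; v = nb (fst n) b in (v, entlab (occ X v) (K v) ((b+3) mod 6)))"

lemma mod3: "(d::nat) < 6 \<Longrightarrow> ((d+3) mod 6 + 1) mod 6 = (d+4) mod 6 \<and> ((d+3) mod 6 + 5) mod 6 = (d+2) mod 6
   \<and> ((d+3) mod 6 + 3) mod 6 = d \<and> (d+3) mod 6 < 6"
  by (elim lt6[elim_format] disjE) simp_all

lemma occ_nb: assumes "d < 6" "v = nb u d"
  shows "occ X v ((d+3) mod 6) = (u \<in> X)" "occ X v ((d+4) mod 6) = occ X u ((d+5) mod 6)"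
    "occ X v ((d+2) mod 6) = occ X u ((d+1) mod 6)"
  using G1[OF assms(1)] G2[OF assms(1)] G3[OF assms(1)] assms(2) unfolding occ_def by auto

lemma ev_gv: assumes "d < 6" "u \<in> X"
  shows "ev (occ X (nb u d)) ((d+3) mod 6) \<longleftrightarrow> \<not> occ X u ((d+5) mod 6)"
  using occ_nb[OF assms(1) refl, of X u] mod3[OF assms(1)] assms(2) unfolding ev_def by simp

lemma gv_ev: assumes "d < 6" "u \<in> X"
  shows "gv (occ X (nb u d)) ((d+3) mod 6) \<longleftrightarrow> \<not> occ X u ((d+1) mod 6)"
  using occ_nb[OF assms(1) refl, of X u] mod3[OF assms(1)] assms(2) unfolding gv_def by simp

lemma exlab_lt: "gv oc b \<Longrightarrow> exlab oc b < 72"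
  unfolding exlab_def gv_def using gl_lt entd_lt by simp
lemma exlab_b: "gv oc b \<Longrightarrow> (exlab oc b div 2) mod 6 = b"
  unfolding exlab_def gv_def using gl_b by simp
lemma entlab_lt: "a < 6 \<Longrightarrow> entlab oc k a < 72"
  unfolding entlab_def using gl_lt exitd_lt by simp
lemma entlab_gl: "\<exists>p<2. entlab oc k a = gl a (exitd oc ((a+1) mod 6)) p"
proof (cases "iscut oc k a")
  case True then show ?thesis unfolding entlab_def by (intro exI[of _ 0]) simp
next
  case False then show ?thesis unfolding entlab_def by (intro exI[of _ 1]) simp
qed
lemma entlab_inj: "entlab oc k a = entlab oc' k' a' \<Longrightarrow> a = a'"
proof -
  assume e: "entlab oc k a = entlab oc' k' a'"
  obtain p where p: "p < 2" "entlab oc k a = gl a (exitd oc ((a+1) mod 6)) p" using entlab_gl by blast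
  obtain p' where p': "p' < 2" "entlab oc' k' a' = gl a' (exitd oc' ((a'+1) mod 6)) p'" using entlab_gl by blast
  show ?thesis using gl_inj[OF exitd_lt exitd_lt p(1) p'(1)] e p p' by simp
qed
lemma lab1_exit: "gv oc b \<Longrightarrow> lab1 oc k (b, xl b) = exlab oc b"
  unfolding lab1_def gv_def by simp
lemma lab1_entry: "ev oc a \<Longrightarrow> lab1 oc k (a, nl a) = entlab oc k a"
proof -
  assume "ev oc a"
  moreover have "nl a \<noteq> xl a" using xl_nl[of a] by auto
  ultimately show ?thesis unfolding lab1_def ev_def by auto
qed

lemma circ_edgesI: "u \<in> X \<Longrightarrow> nb u d \<in> X \<Longrightarrow> d < 6 \<Longrightarrow> i < c \<Longrightarrow>
   ((u, lbl u (d, i)), (nb u d, lbl (nb u d) ((d + 3) mod 6, i))) \<in> circ_edges X c lbl"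
  unfolding circ_edges_def mem_Collect_eq
  by (rule exI[of _ u], rule exI[of _ "nb u d"], rule exI[of _ d], rule exI[of _ i]) simp

lemma circ_edgesE:
  assumes "(x, y) \<in> circ_edges X c lbl"
  obtains u d i where "x = (u, lbl u (d, i))" "y = (nb u d, lbl (nb u d) ((d + 3) mod 6, i))"
    "u \<in> X" "nb u d \<in> X" "d < 6" "i < c"
proof -
  from assms have "\<exists>u v d i. (x, y) = ((u, lbl u (d, i)), (v, lbl v ((d + 3) mod 6, i))) \<and>
      u \<in> X \<and> v \<in> X \<and> d < 6 \<and> i < c \<and> v = nb u d"
    unfolding circ_edges_def by (simp only: mem_Collect_eq)
  then obtain u v d i where h: "(x, y) = ((u, lbl u (d, i)), (v, lbl v ((d + 3) mod 6, i)))"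
      "u \<in> X" "v \<in> X" "d < 6" "i < c" "v = nb u d" by (elim exE conjE)
  show ?thesis using that[of u d i] h by simp
qed

lemma circ_edges_sym: assumes "(x, y) \<in> circ_edges X c lbl" shows "(y, x) \<in> circ_edges X c lbl"
proof -
  from assms obtain u d i where h0: "x = (u, lbl u (d, i))" "y = (nb u d, lbl (nb u d) ((d + 3) mod 6, i))"
    "u \<in> X" "nb u d \<in> X" "d < 6" "i < c" by (rule circ_edgesE)
  define v where "v = nb u d"
  have h: "x = (u, lbl u (d, i))" "y = (v, lbl v ((d + 3) mod 6, i))"
    "u \<in> X" "v \<in> X" "d < 6" "i < c" "v = nb u d" using h0 v_def by auto
  have dd: "((d+3) mod 6 + 3) mod 6 = d" "(d+3) mod 6 < 6" using mod3[OF h(5)] by auto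
  have uv: "nb v ((d+3) mod 6) = u" using G1[OF h(5)] h(7) by simp
  have "((v, lbl v ((d + 3) mod 6, i)), (nb v ((d+3) mod 6), lbl (nb v ((d+3) mod 6)) (((d + 3) mod 6 + 3) mod 6, i)))
     \<in> circ_edges X c lbl" by (rule circ_edgesI) (use h uv dd in auto)
  then show ?thesis by (simp only: uv dd h(1) h(2))
qed

lemma rtrancl_circ_sym: "(x, y) \<in> (circ_edges X c lbl)\<^sup>* \<Longrightarrow> (y, x) \<in> (circ_edges X c lbl)\<^sup>*"
proof (induction rule: rtrancl_induct)
  case base then show ?case by simp
next
  case (step y z)
  then show ?case using circ_edges_sym by (meson converse_rtrancl_into_rtrancl)
qed

lemma EC:
  assumes "((u, L), (v, M)) \<in> circ_edges X 2 (Lb X K)" "L < 72"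
  shows "u \<in> X \<and> v \<in> X \<and> M < 72 \<and>
    ((hoN X (u, L) \<and> (v, M) = scN X K (u, L)) \<or> (hoN X (v, M) \<and> (u, L) = scN X K (v, M)))"
proof -
  from assms(1) obtain u' d i where h0: "(u, L) = (u', Lb X K u' (d, i))"
    "(v, M) = (nb u' d, Lb X K (nb u' d) ((d + 3) mod 6, i))" "u' \<in> X" "nb u' d \<in> X" "d < 6" "i < 2"
    by (rule circ_edgesE)
  have h: "u \<in> X" "v \<in> X" "d < 6" "i < 2" "v = nb u d"
    "L = Lb X K u (d, i)" "M = Lb X K v ((d + 3) mod 6, i)" using h0 by auto
  let ?ou = "occ X u" and ?ov = "occ X v"
  have m3: "((d+3) mod 6 + 1) mod 6 = (d+4) mod 6" "((d+3) mod 6 + 5) mod 6 = (d+2) mod 6"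
    "((d+3) mod 6 + 3) mod 6 = d" "(d+3) mod 6 < 6" using mod3[OF h(3)] by auto
  have xn: "xl ((d+3) mod 6) = nl d" "nl ((d+3) mod 6) = xl d" using xl_nl3[OF h(3)] by auto
  show ?thesis
  proof (cases "i = xl d \<and> gv ?ou d")
    case True
    then have L: "L = exlab ?ou d" using h(6) unfolding Lb_def lab1_def using h(3) by simp
    have ev: "ev ?ov ((d+3) mod 6)" using ev_gv[OF h(3) h(1)] True h(5) unfolding gv_def by simp
    have "M = entlab ?ov (K v) ((d+3) mod 6)"
      using h(7) True xn lab1_entry[OF ev, of "K v"] unfolding Lb_def by simp
    moreover have "hoN X (u, L)" using True L h(1) unfolding hoN_def by auto
    moreover have "scN X K (u, L) = (v, entlab ?ov (K v) ((d+3) mod 6))"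
      unfolding scN_def using L exlab_b[of ?ou d] True h(5) by (simp add: Let_def)
    ultimately show ?thesis using h entlab_lt m3 by auto
  next
    case False
    have "L \<noteq> 100" using assms(2) by simp
    then have En: "i = nl d \<and> ev ?ou d" using h(6) False h(3) unfolding Lb_def lab1_def by (auto split: if_splits)
    then have L: "L = entlab ?ou (K u) d" using lab1_entry[of ?ou d "K u"] h(6) unfolding Lb_def by simp
    have gv: "gv ?ov ((d+3) mod 6)" using gv_ev[OF h(3) h(1)] En h(5) unfolding ev_def by simp
    have M: "M = exlab ?ov ((d+3) mod 6)"
      using h(7) En xn lab1_exit[OF gv, of "K v"] unfolding Lb_def by simp
    have "hoN X (v, M)" using gv M h(2) unfolding hoN_def by auto
    moreover have "scN X K (v, M) = (u, L)"
    proof -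
      have "(M div 2) mod 6 = (d+3) mod 6" using M exlab_b[OF gv] by simp
      moreover have "nb v ((d+3) mod 6) = u" using G1[OF h(3)] h(5) by simp
      ultimately show ?thesis unfolding scN_def using L m3 by (simp add: Let_def)
    qed
    moreover have "M < 72" using M exlab_lt[OF gv] by simp
    ultimately show ?thesis using h by auto
  qed
qed

lemma efwd: assumes "hoN X n" shows "(n, scN X K n) \<in> circ_edges X 2 (Lb X K)"
proof -
  obtain u L where n: "n = (u, L)" by fastforce
  from assms obtain b where b: "u \<in> X" "gv (occ X u) b" "L = exlab (occ X u) b" unfolding hoN_def n by auto
  have b6: "b < 6" and vX: "nb u b \<in> X" and nocc: "\<not> occ X u ((b+5) mod 6)" using b(2) unfolding gv_def occ_def by auto
  have ev: "ev (occ X (nb u b)) ((b+3) mod 6)" using ev_gv[OF b6 b(1)] nocc by simp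
  have e: "((u, Lb X K u (b, xl b)), (nb u b, Lb X K (nb u b) ((b + 3) mod 6, xl b))) \<in> circ_edges X 2 (Lb X K)"
    using circ_edgesI[OF b(1) vX b6, of "xl b" 2] xl_lt by simp
  have "Lb X K u (b, xl b) = L" using b lab1_exit unfolding Lb_def by simp
  moreover have "Lb X K (nb u b) ((b + 3) mod 6, xl b) = entlab (occ X (nb u b)) (K (nb u b)) ((b+3) mod 6)"
    using lab1_entry[OF ev] xl_nl3[OF b6] unfolding Lb_def by simp
  moreover have "scN X K n = (nb u b, entlab (occ X (nb u b)) (K (nb u b)) ((b+3) mod 6))"
    unfolding scN_def n using b exlab_b by (simp add: Let_def)
  ultimately show ?thesis using e n by simp
qed

lemma scN_inj: assumes "hoN X n" "hoN X m" "scN X K n = scN X K m" shows "n = m"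
proof -
  obtain u L where n: "n = (u, L)" by fastforce
  obtain u' L' where m: "m = (u', L')" by fastforce
  from assms(1) obtain b where b: "u \<in> X" "gv (occ X u) b" "L = exlab (occ X u) b" unfolding hoN_def n by auto
  from assms(2) obtain b' where b': "u' \<in> X" "gv (occ X u') b'" "L' = exlab (occ X u') b'" unfolding hoN_def m by auto
  have b6: "b < 6" "b' < 6" using b b' unfolding gv_def by auto
  have sn: "scN X K n = (nb u b, entlab (occ X (nb u b)) (K (nb u b)) ((b+3) mod 6))"
    unfolding scN_def n using b exlab_b by (simp add: Let_def)
  have sm: "scN X K m = (nb u' b', entlab (occ X (nb u' b')) (K (nb u' b')) ((b'+3) mod 6))"
    unfolding scN_def m using b' exlab_b by (simp add: Let_def)
  have v: "nb u b = nb u' b'" and e3: "(b+3) mod 6 = (b'+3) mod 6"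
    using assms(3) sn sm entlab_inj by auto
  have "((b+3) mod 6 + 3) mod 6 = ((b'+3) mod 6 + 3) mod 6" using e3 by simp
  then have bb: "b = b'" using mod3[OF b6(1)] mod3[OF b6(2)] by simp
  have "u = nb (nb u b) ((b+3) mod 6)" using G1[OF b6(1)] by simp
  also have "\<dots> = nb (nb u' b') ((b'+3) mod 6)" using v bb by simp
  also have "\<dots> = u'" using G1[OF b6(2)] by simp
  finally have uu: "u = u'" .
  show ?thesis using n m b(3) b'(3) bb uu by simp
qed

lemma nopred_out: assumes "K v" "\<not> occ X v 3" "hoN X n"
  shows "scN X K n \<noteq> (v, gl (entd (occ X v) 3) (exitd (occ X v) 3) 1)"
proof
  assume eq: "scN X K n = (v, gl (entd (occ X v) 3) (exitd (occ X v) 3) 1)"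
  define b where "b = (snd n div 2) mod 6"
  define a where "a = (b + 3) mod 6"
  have "fst (scN X K n) = v" using eq by simp
  then have v: "nb (fst n) b = v" unfolding scN_def b_def by (simp add: Let_def)
  have "snd (scN X K n) = entlab (occ X v) (K v) a" unfolding scN_def a_def b_def using v b_def by (simp add: Let_def)
  then have e: "entlab (occ X v) (K v) a = gl (entd (occ X v) 3) (exitd (occ X v) 3) 1" using eq by simp
  show False
  proof (cases "iscut (occ X v) (K v) a")
    case True
    then have "entlab (occ X v) (K v) a = gl a (exitd (occ X v) ((a+1) mod 6)) 0" unfolding entlab_def by simp
    then have g: "gl a (exitd (occ X v) ((a+1) mod 6)) 0 = gl (entd (occ X v) 3) (exitd (occ X v) 3) 1" using e by simp
    show False using gl_inj[OF exitd_lt exitd_lt _ _ g] by simp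
  next
    case False
    then have "entlab (occ X v) (K v) a = gl a (exitd (occ X v) ((a+1) mod 6)) 1" unfolding entlab_def by simp
    then have g: "gl a (exitd (occ X v) ((a+1) mod 6)) 1 = gl (entd (occ X v) 3) (exitd (occ X v) 3) 1" using e by simp
    have gi: "a = entd (occ X v) 3 \<and> exitd (occ X v) ((a+1) mod 6) = exitd (occ X v) 3 \<and> (1::nat) = 1"
      by (rule gl_inj[OF exitd_lt exitd_lt _ _ g]) simp_all
    then have "a = entd (occ X v) 3 \<and> exitd (occ X v) ((a+1) mod 6) = exitd (occ X v) 3" by blast
    then have "iscut (occ X v) (K v) a" unfolding iscut_def using assms by blast
    then show False using False by simp
  qed
qed


definition outh :: "node set \<Rightarrow> node \<Rightarrow> node \<times> nat" where
  "outh X v = (v, gl (entd (occ X v) 3) (exitd (occ X v) 3) 1)"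
definition inh :: "node set \<Rightarrow> node \<Rightarrow> node \<times> nat" where
  "inh X v = (v, gl (entd (occ X v) 3) (exitd (occ X v) 3) 0)"

lemma hoN_expl: assumes "hoN X n"
  shows "\<exists>u b. n = (u, exlab (occ X u) b) \<and> u \<in> X \<and> gv (occ X u) b \<and> nb u b \<in> X \<and>
     scN X K n = (nb u b, entlab (occ X (nb u b)) (K (nb u b)) ((b+3) mod 6))"
proof -
  obtain u L where n: "n = (u, L)" by fastforce
  from assms obtain b where b: "u \<in> X" "gv (occ X u) b" "L = exlab (occ X u) b" unfolding hoN_def n by auto
  have "scN X K n = (nb u b, entlab (occ X (nb u b)) (K (nb u b)) ((b+3) mod 6))"
    unfolding scN_def n using b exlab_b by (simp add: Let_def)
  moreover have "nb u b \<in> X" using b(2) unfolding gv_def occ_def by simp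
  ultimately show ?thesis using n b by blast
qed

lemma not_hoN_inh: "\<not> hoN X (inh X v)"
proof
  assume "hoN X (inh X v)"
  then obtain b where b: "gv (occ X v) b" "gl (entd (occ X v) 3) (exitd (occ X v) 3) 0 = exlab (occ X v) b"
    unfolding hoN_def inh_def by auto
  have "b < 6" using b(1) unfolding gv_def by simp
  then show False using b(2) gl_inj[OF exitd_lt \<open>b < 6\<close>, of 0 1] unfolding exlab_def by simp
qed

context
  fixes X :: "node set" and K :: "node \<Rightarrow> bool" and wR :: node
  assumes finX: "finite X" and nonisoX: "\<And>u. u \<in> X \<Longrightarrow> noniso (occ X u)"
    and Kc: "\<And>u. K u \<Longrightarrow> \<not> occ X u 3" and wRX: "wR \<in> X" and KwR: "K wR"
begin

lemma walk_inst: "\<exists>k. (\<forall>j<k. hoN X ((scN X K ^^ j) (outh X wR))) \<and> \<not> hoN X ((scN X K ^^ k) (outh X wR)) \<and>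
     (\<forall>j\<le>k. (scN X K ^^ j) (outh X wR) \<in> X \<times> {..<72}) \<and>
     (\<forall>m. (outh X wR, m) \<in> (circ_edges X 2 (Lb X K))\<^sup>* \<longleftrightarrow> (\<exists>j\<le>k. m = (scN X K ^^ j) (outh X wR)))"
proof (rule walk)
  show "finite (X \<times> {..<72::nat})" using finX by simp
  show "outh X wR \<in> X \<times> {..<72}" unfolding outh_def using wRX gl_lt[OF entd_lt exitd_lt] by simp
  show "scN X K n \<in> X \<times> {..<72}" if "n \<in> X \<times> {..<72}" "hoN X n" for n
    using hoN_expl[OF that(2), of K] entlab_lt[of "(_ + 3) mod 6"] by fastforce
  show "n = m" if "n \<in> X \<times> {..<72}" "m \<in> X \<times> {..<72}" "hoN X n" "hoN X m" "scN X K n = scN X K m" for n m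
    using scN_inj that by blast
  show "scN X K n \<noteq> outh X wR" if "n \<in> X \<times> {..<72}" "hoN X n" for n
    using nopred_out[where K=K and v=wR and X=X and n=n, OF KwR Kc[OF KwR] that(2)] unfolding outh_def by simp
  show "(n, scN X K n) \<in> circ_edges X 2 (Lb X K)" if "n \<in> X \<times> {..<72}" "hoN X n" for n
    using efwd that(2) by blast
  show "m \<in> X \<times> {..<72} \<and> (hoN X n \<and> m = scN X K n \<or> hoN X m \<and> n = scN X K m)"
    if "(n, m) \<in> circ_edges X 2 (Lb X K)" "n \<in> X \<times> {..<72}" for n m
  proof -
    obtain u L where n: "n = (u, L)" by fastforce
    obtain v M where m: "m = (v, M)" by fastforce
    show ?thesis using EC[of u L v M X K] that n m by auto
  qed
qed

lemma ho_s0: "hoN X (outh X wR)"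
proof -
  have "gv (occ X wR) (exitd (occ X wR) 3) \<and> exlab (occ X wR) (exitd (occ X wR) 3) = gl (entd (occ X wR) 3) (exitd (occ X wR) 3) 1"
    using GVX Kc[OF KwR] nonisoX[OF wRX] by blast
  then show ?thesis unfolding hoN_def outh_def using wRX by auto
qed

context
  fixes k :: nat
  assumes k1: "\<forall>j<k. hoN X ((scN X K ^^ j) (outh X wR))" and k2: "\<not> hoN X ((scN X K ^^ k) (outh X wR))"
    and k3: "\<forall>j\<le>k. (scN X K ^^ j) (outh X wR) \<in> X \<times> {..<72}"
    and k4: "\<forall>m. (outh X wR, m) \<in> (circ_edges X 2 (Lb X K))\<^sup>* \<longleftrightarrow> (\<exists>j\<le>k. m = (scN X K ^^ j) (outh X wR))"
begin

lemma final_node: "\<exists>v. (scN X K ^^ k) (outh X wR) = inh X v \<and> K v \<and> v \<in> X"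
proof -
  have "k \<noteq> 0" using ho_s0 k2 by (cases k) auto
  then obtain k' where kk: "k = Suc k'" by (cases k) auto
  have ho: "hoN X ((scN X K ^^ k') (outh X wR))" using k1 kk by simp
  obtain u b where ub: "(scN X K ^^ k') (outh X wR) = (u, exlab (occ X u) b)" "u \<in> X" "gv (occ X u) b"
    "nb u b \<in> X" "scN X K ((scN X K ^^ k') (outh X wR)) = (nb u b, entlab (occ X (nb u b)) (K (nb u b)) ((b+3) mod 6))"
    using hoN_expl[OF ho, of K] by blast
  define v where "v = nb u b"
  define a where "a = (b+3) mod 6"
  have b6: "b < 6" using ub(3) unfolding gv_def by simp
  have sk: "(scN X K ^^ k) (outh X wR) = (v, entlab (occ X v) (K v) a)" using ub(5) kk v_def a_def by simp
  have ev: "ev (occ X v) a" using ev_gv[OF b6 ub(2)] ub(3) unfolding gv_def v_def a_def by simp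
  have nv: "noniso (occ X v)" using nonisoX ub(4) v_def by simp
  show ?thesis
  proof (cases "iscut (occ X v) (K v) a")
    case True
    then have c: "K v" "\<not> occ X v 3" "exitd (occ X v) ((a+1) mod 6) = exitd (occ X v) 3" unfolding iscut_def by auto
    have "a = entd (occ X v) 3" using CUTA[OF ev nv c(2) c(3)] .
    then have "(scN X K ^^ k) (outh X wR) = inh X v" using sk True c unfolding entlab_def inh_def by simp
    then show ?thesis using c(1) ub(4) v_def by blast
  next
    case False
    then have "(scN X K ^^ k) (outh X wR) = (v, exlab (occ X v) (exitd (occ X v) ((a+1) mod 6)))"
      using sk EVGV[OF ev nv] unfolding entlab_def by simp
    moreover have "gv (occ X v) (exitd (occ X v) ((a+1) mod 6))" using EVGV[OF ev nv] by simp
    ultimately have "hoN X ((scN X K ^^ k) (outh X wR))" unfolding hoN_def using ub(4) v_def by auto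
    then show ?thesis using k2 by simp
  qed
qed

definition inW :: "node \<times> nat \<Rightarrow> bool" where
  "inW m \<longleftrightarrow> (\<exists>j\<le>k. m = (scN X K ^^ j) (outh X wR))"

lemma inW_iff: "inW m \<longleftrightarrow> (outh X wR, m) \<in> (circ_edges X 2 (Lb X K))\<^sup>*"
  unfolding inW_def using k4 by blast

lemma hoN_Ns: "hoN X n \<Longrightarrow> n \<in> X \<times> {..<72}"
  unfolding hoN_def using exlab_lt by (cases n) auto

lemma W1: "inW n \<Longrightarrow> hoN X n \<Longrightarrow> inW (scN X K n)"
proof -
  assume "inW n" "hoN X n"
  then obtain j where j: "j \<le> k" "n = (scN X K ^^ j) (outh X wR)" unfolding inW_def by blast
  then have "j < k" using k2 \<open>hoN X n\<close> by (cases "j = k") auto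
  then show ?thesis unfolding inW_def using j by (intro exI[of _ "Suc j"]) auto
qed

lemma W2: "hoN X n \<Longrightarrow> inW (scN X K n) \<Longrightarrow> inW n"
proof -
  assume h: "hoN X n" "inW (scN X K n)"
  then obtain j where j: "j \<le> k" "scN X K n = (scN X K ^^ j) (outh X wR)" unfolding inW_def by blast
  show ?thesis
  proof (cases j)
    case 0
    then show ?thesis using j nopred_out[where K=K and v=wR and X=X and n=n, OF KwR Kc[OF KwR] h(1)]
      unfolding outh_def by simp
  next
    case (Suc j')
    then have "hoN X ((scN X K ^^ j') (outh X wR))" using k1 j by simp
    moreover have "scN X K ((scN X K ^^ j') (outh X wR)) = scN X K n" using j Suc by simp
    ultimately have "n = (scN X K ^^ j') (outh X wR)" using scN_inj h(1) by metis
    then show ?thesis unfolding inW_def using j Suc by (intro exI[of _ j']) auto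
  qed
qed

lemma Wout: "K v \<Longrightarrow> inW (outh X v) \<Longrightarrow> v = wR"
proof -
  assume h: "K v" "inW (outh X v)"
  then obtain j where j: "j \<le> k" "outh X v = (scN X K ^^ j) (outh X wR)" unfolding inW_def by blast
  show ?thesis
  proof (cases j)
    case 0
    then show ?thesis using j unfolding outh_def by simp
  next
    case (Suc j')
    then have "hoN X ((scN X K ^^ j') (outh X wR))" using k1 j by simp
    from nopred_out[where K=K and v=v and X=X, OF h(1) Kc[OF h(1)] this]
    show ?thesis using j Suc unfolding outh_def by simp
  qed
qed

lemma Win: "inW (inh X v) \<Longrightarrow> inh X v = (scN X K ^^ k) (outh X wR)"
proof -
  assume "inW (inh X v)"
  then obtain j where j: "j \<le> k" "inh X v = (scN X K ^^ j) (outh X wR)" unfolding inW_def by blast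
  have "j = k"
  proof (rule ccontr)
    assume "j \<noteq> k"
    then have "hoN X (inh X v)" using k1 j by simp
    then show False using not_hoN_inh by blast
  qed
  then show ?thesis using j by simp
qed

lemma jordan_app:
  assumes sk: "(scN X K ^^ k) (outh X wR) = inh X wR"
    and cX: "induced_connected X" and cE: "induced_connected (- X)"
  shows "\<forall>w\<in>X. K w \<longrightarrow> w = wR"
proof -
  define C where "C = {(u, e). u \<in> X \<and> (\<exists>d<6. e = nb u d \<and> e \<notin> X \<and> inW (u, pn (occ X u) d))}"
  have Cmem: "(u, nb u d) \<in> C \<longleftrightarrow> inW (u, pn (occ X u) d)" if "u \<in> X" "d < 6" "nb u d \<notin> X" for u d
  proof
    assume "(u, nb u d) \<in> C"
    then obtain d' where d': "d' < 6" "nb u d = nb u d'" "inW (u, pn (occ X u) d')" unfolding C_def by auto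
    then have "d = d'" using G4 that(2) by blast
    then show "inW (u, pn (occ X u) d)" using d' by simp
  next
    assume "inW (u, pn (occ X u) d)" then show "(u, nb u d) \<in> C" unfolding C_def using that by blast
  qed
  have CL1: "(u, nb u ((b+5) mod 6)) \<in> C \<longleftrightarrow> (nb u b, nb u ((b+5) mod 6)) \<in> C"
    if u: "u \<in> X" "b < 6" "nb u b \<in> X" "nb u ((b+5) mod 6) \<notin> X" for u b
  proof -
    define v where "v = nb u b"
    define a where "a = (b+3) mod 6"
    define e where "e = nb u ((b+5) mod 6)"
    have gv: "gv (occ X u) b" using u unfolding gv_def occ_def by simp
    have ho: "hoN X (u, exlab (occ X u) b)" unfolding hoN_def using u(1) gv by auto
    have sc: "scN X K (u, exlab (occ X u) b) = (v, entlab (occ X v) (K v) a)"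
      unfolding scN_def v_def a_def using exlab_b[OF gv] by (simp add: Let_def)
    have ev: "ev (occ X v) a" using ev_gv[OF u(2) u(1)] u(4) unfolding v_def a_def occ_def by simp
    have nu: "noniso (occ X u)" using nonisoX u(1) by simp
    have nv: "noniso (occ X v)" using nonisoX u(3) v_def by simp
    have m: "(b+4) mod 6 = (a+1) mod 6" "(a+1) mod 6 < 6" using mod3[OF u(2)] a_def by auto
    have ev2: "e = nb v ((a+1) mod 6)" using G2[OF u(2), of u] m unfolding e_def v_def by simp
    have L: "(u, e) \<in> C \<longleftrightarrow> inW (u, exlab (occ X u) b)"
      using Cmem[OF u(1) _ u(4)] PN1[OF gv nu] unfolding e_def by simp
    have R: "(v, e) \<in> C \<longleftrightarrow> inW (v, gl a (exitd (occ X v) ((a+1) mod 6)) 1)"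
      using Cmem[of v "(a+1) mod 6"] u(3) u(4) m(2) PN2[OF ev nv] ev2 unfolding v_def e_def by simp
    show ?thesis
    proof (cases "iscut (occ X v) (K v) a")
      case False
      then have "scN X K (u, exlab (occ X u) b) = (v, gl a (exitd (occ X v) ((a+1) mod 6)) 1)"
        using sc unfolding entlab_def by simp
      then show ?thesis using L R W1[OF _ ho] W2[OF ho] unfolding e_def v_def by auto
    next
      case True
      then have c: "K v" "\<not> occ X v 3" "exitd (occ X v) ((a+1) mod 6) = exitd (occ X v) 3" unfolding iscut_def by auto
      have aa: "a = entd (occ X v) 3" using CUTA[OF ev nv c(2) c(3)] .
      have sci: "scN X K (u, exlab (occ X u) b) = inh X v" using sc True aa c unfolding entlab_def inh_def by simp
      have R': "(v, e) \<in> C \<longleftrightarrow> inW (outh X v)" using R aa c unfolding outh_def by simp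
      have "inW (u, exlab (occ X u) b) \<longleftrightarrow> inW (outh X v)"
      proof
        assume "inW (u, exlab (occ X u) b)"
        then have "inW (inh X v)" using W1[OF _ ho] sci by simp
        then have "inh X v = inh X wR" using Win sk by simp
        then have "v = wR" unfolding inh_def by simp
        then show "inW (outh X v)" unfolding inW_def by (intro exI[of _ 0]) simp
      next
        assume "inW (outh X v)"
        then have "v = wR" using Wout c(1) by blast
        then have "inW (inh X v)" using sk unfolding inW_def by auto
        then show "inW (u, exlab (occ X u) b)" using W2[OF ho] sci by simp
      qed
      then show ?thesis using L R' unfolding e_def v_def by simp
    qed
  qed
  have CL2: "(u, nb u c) \<in> C \<longleftrightarrow> (u, nb u ((c+1) mod 6)) \<in> C"
    if u: "u \<in> X" "c < 6" "nb u c \<notin> X" "nb u ((c+1) mod 6) \<notin> X" for u c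
  proof -
    have "pn (occ X u) ((c+1) mod 6) = pn (occ X u) c"
      using PN3[OF u(2)] nonisoX[OF u(1)] u unfolding occ_def by simp
    then show ?thesis using Cmem[OF u(1) u(2) u(3)] Cmem[OF u(1) _ u(4)] by simp
  qed
  have cl1: "(u, e) \<in> C \<longleftrightarrow> (v, e) \<in> C"
    if h: "u \<in> X" "v \<in> X" "e \<notin> X" "grid_adj u v" "grid_adj u e" "grid_adj v e" for u v e
  proof -
    obtain b where b: "b < 6" "v = nb u b" using h(4) unfolding grid_adj_nb by blast
    obtain c where c: "c < 6" "e = nb u c" using h(5) unfolding grid_adj_nb by blast
    obtain d where d: "d < 6" "e = nb v d" using h(6) unfolding grid_adj_nb by blast
    have "c = (b+5) mod 6 \<or> c = (b+1) mod 6" using G6[OF b(1) c(1) d(1), of u] b c d by simp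
    then show ?thesis
    proof
      assume "c = (b+5) mod 6"
      then show ?thesis using CL1[OF h(1) b(1)] b c h by simp
    next
      assume cc: "c = (b+1) mod 6"
      define b' where "b' = (b+3) mod 6"
      have b'6: "b' < 6" unfolding b'_def by simp
      have uv: "u = nb v b'" using G1[OF b(1)] b unfolding b'_def by simp
      have "e = nb v ((b'+5) mod 6)" using G3[OF b(1), of u] mod3[OF b(1)] b c cc unfolding b'_def by simp
      then show ?thesis using CL1[OF h(2) b'6] uv h by simp
    qed
  qed
  have cl2: "(u, e) \<in> C \<longleftrightarrow> (u, e') \<in> C"
    if h: "u \<in> X" "e \<notin> X" "e' \<notin> X" "grid_adj u e" "grid_adj u e'" "grid_adj e e'" for u e e'
  proof -
    obtain c where c: "c < 6" "e = nb u c" using h(4) unfolding grid_adj_nb by blast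
    obtain c' where c': "c' < 6" "e' = nb u c'" using h(5) unfolding grid_adj_nb by blast
    obtain d where d: "d < 6" "e' = nb e d" using h(6) unfolding grid_adj_nb by blast
    have "c' = (c+5) mod 6 \<or> c' = (c+1) mod 6" using G6[OF c(1) c'(1) d(1), of u] c c' d by simp
    then show ?thesis
    proof
      assume cc: "c' = (c+5) mod 6"
      then have "c = (c'+1) mod 6" using c(1) by (elim lt6[elim_format] disjE) simp_all
      then show ?thesis using CL2[OF h(1) c'(1)] c c' h by simp
    next
      assume "c' = (c+1) mod 6"
      then show ?thesis using CL2[OF h(1) c(1)] c c' h by simp
    qed
  qed
  have wn: "nb wR 3 \<notin> X" using Kc[OF KwR] unfolding occ_def by simp
  have ne: "(wR, nb wR 3) \<in> C"
  proof -
    have "inW (outh X wR)" unfolding inW_def by (intro exI[of _ 0]) simp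
    then show ?thesis using Cmem[OF wRX _ wn] unfolding outh_def pn_def by simp
  qed
  have adj3: "grid_adj w (nb w 3)" for w using adjnb[of 3 w] by simp
  show ?thesis
  proof (intro ballI impI)
    fix w assume w: "w \<in> X" "K w"
    have wn': "nb w 3 \<notin> X" using Kc[OF w(2)] unfolding occ_def by simp
    have "(w, nb w 3) \<in> C"
      using jordan[OF finX cX cE cl1 cl2 ne wRX wn adj3 w(1) wn' adj3] by blast
    then have "inW (outh X w)" using Cmem[OF w(1) _ wn'] unfolding outh_def pn_def by simp
    then show "w = wR" using Wout w(2) by blast
  qed
qed

end

end


section \<open>Portals\<close>

lemma x_edges_sym: "(a, b) \<in> x_edges X \<Longrightarrow> (b, a) \<in> x_edges X"
  unfolding x_edges_def by auto

lemma x_rtrancl_sym: "(a, b) \<in> (x_edges X)\<^sup>* \<Longrightarrow> (b, a) \<in> (x_edges X)\<^sup>*"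
proof (induction rule: rtrancl_induct)
  case base then show ?case by simp
next
  case (step y z) then show ?case using x_edges_sym by (meson converse_rtrancl_into_rtrancl)
qed

lemma portal_eq: "(w, u) \<in> (x_edges X)\<^sup>* \<Longrightarrow> portal X u = portal X w"
  unfolding portal_def using x_rtrancl_sym by (meson rtrancl_trans)

lemma west_end_ex:
  assumes "finite X" "r \<in> X"
  shows "\<exists>w\<in>X. (r, w) \<in> (x_edges X)\<^sup>* \<and> nb w 3 \<notin> X"
proof -
  define S where "S = {w \<in> X. (r, w) \<in> (x_edges X)\<^sup>*}"
  have fS: "finite S" using assms(1) unfolding S_def by simp
  have rS: "r \<in> S" using assms(2) unfolding S_def by simp
  define m where "m = Min (fst ` S)"
  have "m \<in> fst ` S" unfolding m_def using fS rS by (intro Min_in) auto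
  then obtain w where w: "w \<in> S" "fst w = m" by auto
  have mn: "m \<le> fst w'" if "w' \<in> S" for w' unfolding m_def using fS that by simp
  show ?thesis
  proof (cases "nb w 3 \<in> X")
    case True
    have "w = nb (nb w 3) 0" using G1[of 3 w] by simp
    then have "(w, nb w 3) \<in> x_edges X" using True w(1) unfolding x_edges_def S_def by auto
    then have "nb w 3 \<in> S" using w(1) True unfolding S_def by (auto intro: rtrancl_into_rtrancl)
    then have "m \<le> fst (nb w 3)" by (rule mn)
    then show ?thesis using w(2) by (simp add: nbs)
  next
    case False then show ?thesis using w(1) unfolding S_def by blast
  qed
qed

lemma west_mono:
  assumes "w \<in> X" "nb w 3 \<notin> X" "(w, v) \<in> (x_edges X)\<^sup>*"
  shows "snd v = snd w \<and> fst w \<le> fst v \<and> v \<in> X"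
  using assms(3)
proof (induction rule: rtrancl_induct)
  case base then show ?case using assms(1) by simp
next
  case (step v v')
  from step(2) have v': "v' \<in> X" "v' = nb v 0 \<or> v = nb v' 0" unfolding x_edges_def by auto
  from v'(2) show ?case
  proof
    assume "v' = nb v 0" then show ?thesis using step(3) v'(1) by (simp add: nbs)
  next
    assume h: "v = nb v' 0"
    then have vv: "v' = nb v 3" using G1[of 0 v'] by simp
    have "fst v \<noteq> fst w"
    proof
      assume "fst v = fst w"
      then have "v = w" using step(3) by (simp add: prod_eq_iff)
      then show False using vv v'(1) assms(2) by simp
    qed
    then show ?thesis using step(3) vv v'(1) by (simp add: nbs)
  qed
qed

lemma west_end_uniq:
  assumes "w \<in> X" "nb w 3 \<notin> X" "w' \<in> X" "nb w' 3 \<notin> X" "portal X w = portal X w'"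
  shows "w = w'"
proof -
  have "w' \<in> portal X w'" unfolding portal_def by simp
  then have "w' \<in> portal X w" using assms(5) by simp
  then have a: "(w, w') \<in> (x_edges X)\<^sup>*" unfolding portal_def by simp
  have "w \<in> portal X w" unfolding portal_def by simp
  then have "w \<in> portal X w'" using assms(5) by simp
  then have b: "(w', w) \<in> (x_edges X)\<^sup>*" unfolding portal_def by simp
  show ?thesis using west_mono[OF assms(1,2) a] west_mono[OF assms(3,4) b] by (simp add: prod_eq_iff)
qed

section \<open>Second round circuit\<close>

definition lab2 :: "pin \<Rightarrow> nat" where
  "lab2 p = (if (fst p = 0 \<or> fst p = 3) \<and> snd p = 0 then 0 else 1)"

lemma R2:
  assumes "((w, 0), y) \<in> (circ_edges X c (\<lambda>u. lab2))\<^sup>*"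
  shows "snd y = 0 \<and> (w, fst y) \<in> (x_edges X)\<^sup>*"
  using assms
proof (induction rule: rtrancl_induct)
  case base then show ?case by simp
next
  case (step y z)
  from step(2) obtain u d i where h: "y = (u, lab2 (d, i))" "z = (nb u d, lab2 ((d + 3) mod 6, i))"
    "u \<in> X" "nb u d \<in> X" "d < 6" "i < c" by (rule circ_edgesE)
  have l0: "lab2 (d, i) = 0" using step(3) h(1) by simp
  then have di: "(d = 0 \<or> d = 3) \<and> i = 0" unfolding lab2_def by (simp split: if_splits)
  then have "snd z = 0" using h(2) unfolding lab2_def by auto
  moreover have "(u, nb u d) \<in> x_edges X"
  proof -
    have "nb u d = nb u 0 \<or> u = nb (nb u d) 0" using di G1[of 3 u] by auto
    then show ?thesis using h(3,4) unfolding x_edges_def by auto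
  qed
  ultimately show ?case using step(3) h by (auto intro: rtrancl_into_rtrancl)
qed

lemma R2':
  assumes "(w, u) \<in> (x_edges X)\<^sup>*" "0 < c"
  shows "((w, 0), (u, 0)) \<in> (circ_edges X c (\<lambda>u. lab2))\<^sup>*"
  using assms(1)
proof (induction rule: rtrancl_induct)
  case base then show ?case by simp
next
  case (step a b)
  from step(2) have ab: "a \<in> X" "b \<in> X" "b = nb a 0 \<or> a = nb b 0" unfolding x_edges_def by auto
  have "((a, 0), (b, 0)) \<in> circ_edges X c (\<lambda>u. lab2)"
  proof (cases "b = nb a 0")
    case True
    then show ?thesis using circ_edgesI[of a X 0 0 c "\<lambda>u. lab2"] ab assms(2) unfolding lab2_def by simp
  next
    case False
    then have "a = nb b 0" using ab by simp
    then have "b = nb a 3" using G1[of 0 b] by simp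
    then show ?thesis using circ_edgesI[of a X 3 0 c "\<lambda>u. lab2"] ab assms(2) unfolding lab2_def by simp
  qed
  then show ?case by (rule rtrancl_into_rtrancl[OF step(3)])
qed

section \<open>State encoding\<close>

fun enc :: "bool list \<Rightarrow> nat" where
  "enc [] = 0"
| "enc (b # bs) = (if b then 1 else 0) + 2 * enc bs"

definition bitn :: "nat \<Rightarrow> nat \<Rightarrow> bool" where "bitn n i = odd (n div 2 ^ i)"

lemma bitn_enc: "i < length bs \<Longrightarrow> bitn (enc bs) i = bs ! i"
proof (induction bs arbitrary: i)
  case Nil then show ?case by simp
next
  case (Cons b bs)
  show ?case
  proof (cases i)
    case 0 then show ?thesis unfolding bitn_def by simp
  next
    case (Suc j)
    have "enc (b # bs) div 2 ^ i = (enc (b # bs) div 2) div 2 ^ j" using Suc by (simp add: div_mult2_eq)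
    also have "enc (b # bs) div 2 = enc bs" by simp
    finally show ?thesis using Cons Suc unfolding bitn_def by simp
  qed
qed

lemma enc_lt: "enc bs < 2 ^ length bs"
  by (induction bs) auto

definition mk :: "bool \<Rightarrow> bool \<Rightarrow> (nat \<Rightarrow> bool) \<Rightarrow> bool \<Rightarrow> bool \<Rightarrow> bool \<Rightarrow> nat" where
  "mk p0 p1 oc r q f = enc [p0, p1, oc 0, oc 1, oc 2, oc 3, oc 4, oc 5, r, q, f]"

definition P0 :: "nat \<Rightarrow> bool" where "P0 s = bitn s 0"
definition P1 :: "nat \<Rightarrow> bool" where "P1 s = bitn s 1"
definition Ob :: "nat \<Rightarrow> nat \<Rightarrow> bool" where "Ob s d = bitn s (2 + d mod 6)"
definition Rb :: "nat \<Rightarrow> bool" where "Rb s = bitn s 8"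
definition Qb :: "nat \<Rightarrow> bool" where "Qb s = bitn s 9"
definition Fb :: "nat \<Rightarrow> bool" where "Fb s = bitn s 10"

lemma mk_lt: "mk p0 p1 oc r q f < 2 ^ 11"
  unfolding mk_def using enc_lt[of "[p0, p1, oc 0, oc 1, oc 2, oc 3, oc 4, oc 5, r, q, f]"] by simp

lemma mk_dec: "P0 (mk p0 p1 oc r q f) = p0" "P1 (mk p0 p1 oc r q f) = p1"
  "Rb (mk p0 p1 oc r q f) = r" "Qb (mk p0 p1 oc r q f) = q" "Fb (mk p0 p1 oc r q f) = f"
  unfolding P0_def P1_def Rb_def Qb_def Fb_def mk_def by (simp_all del: enc.simps add: bitn_enc)

lemma mk_O: "Ob (mk p0 p1 oc r q f) = (\<lambda>d. oc (d mod 6))"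
proof
  fix d :: nat
  have "d mod 6 < 6" by simp
  then show "Ob (mk p0 p1 oc r q f) d = oc (d mod 6)"
    unfolding Ob_def mk_def by (elim lt6[elim_format] disjE) (simp_all del: enc.simps add: bitn_enc)
qed

lemma occ_mod: "(\<lambda>d. occ X u (d mod 6)) = occ X u"
  unfolding occ_def using nb_mod by auto


definition cutf :: "nat \<Rightarrow> bool" where "cutf s \<longleftrightarrow> (Rb s \<or> Qb s) \<and> \<not> Ob s 3"

definition dlt :: "nat \<Rightarrow> (pin \<Rightarrow> bool) \<Rightarrow> nat \<times> (pin \<Rightarrow> nat) \<times> nat set" where
  "dlt s b = (if \<not> P0 s \<and> \<not> P1 s then
      (mk True False (Ob s) (Rb s) (Qb s) False, lab1 (Ob s) (cutf s),
       if Rb s \<and> \<not> Ob s 3 \<and> noniso (Ob s) then {exlab (Ob s) (exitd (Ob s) 3)} else {})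
    else if P0 s \<and> \<not> P1 s then
      (let e = noniso (Ob s) \<and> Qb s \<and> \<not> Ob s 3 \<and> b (entd (Ob s) 3, nl (entd (Ob s) 3)) in
       (mk False True (Ob s) (Rb s) (Qb s) e, lab2, if e then {0} else {}))
    else if \<not> P0 s \<and> P1 s then
      (mk True True (Ob s) (Rb s) (Qb s) (b (0, 0) \<or> (\<not> noniso (Ob s) \<and> Qb s)), lab2, {})
    else (s, lab2, {}))"

definition alg :: algo where
  "alg = \<lparr>links = 2, states = {..<2^11}, init = (\<lambda>nbr l r q. mk False False nbr r q False),
          delta = dlt, out_fn = Fb\<rparr>"

lemma mk_lt': "mk p0 p1 oc r q f < 2048" using mk_lt[of p0 p1 oc r q f] by simp

lemma valid_alg: "valid_algo alg"
  unfolding valid_algo_def alg_def by (auto simp: dlt_def mk_lt' Let_def)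

lemma dlt0: "(\<lambda>d. oc (d mod 6)) = oc \<Longrightarrow> dlt (mk False False oc r q f) b =
   (mk True False oc r q False, lab1 oc ((r \<or> q) \<and> \<not> oc 3),
    if r \<and> \<not> oc 3 \<and> noniso oc then {exlab oc (exitd oc 3)} else {})"
  unfolding dlt_def cutf_def by (simp add: mk_dec mk_O)

lemma dlt1: "(\<lambda>d. oc (d mod 6)) = oc \<Longrightarrow> dlt (mk True False oc r q f) b =
   (mk False True oc r q (noniso oc \<and> q \<and> \<not> oc 3 \<and> b (entd oc 3, nl (entd oc 3))), lab2,
    if noniso oc \<and> q \<and> \<not> oc 3 \<and> b (entd oc 3, nl (entd oc 3)) then {0} else {})"
  unfolding dlt_def by (simp add: mk_dec mk_O Let_def)

lemma dlt2: "(\<lambda>d. oc (d mod 6)) = oc \<Longrightarrow> dlt (mk False True oc r q f) b =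
   (mk True True oc r q (b (0, 0) \<or> (\<not> noniso oc \<and> q)), lab2, {})"
  unfolding dlt_def by (simp add: mk_dec mk_O)

lemma occ_eta: "(\<lambda>d. nb u d \<in> X) = occ X u" by (rule ext) (simp add: occ_def)

lemma run3:
  "fst (run alg X ldr inR inQ 3) = (\<lambda>u. mk True True (occ X u) (inR u) (inQ u)
     (received X 2 (\<lambda>u. lab2)
        (\<lambda>u. if noniso (occ X u) \<and> inQ u \<and> \<not> occ X u 3 \<and>
               received X 2 (\<lambda>u. lab1 (occ X u) ((inR u \<or> inQ u) \<and> \<not> occ X u 3))
                 (\<lambda>u. if inR u \<and> \<not> occ X u 3 \<and> noniso (occ X u) then {exlab (occ X u) (exitd (occ X u) 3)} else {})
                 u (entd (occ X u) 3, nl (entd (occ X u) 3))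
             then {0} else {}) u (0, 0)
      \<or> (\<not> noniso (occ X u) \<and> inQ u)))"
proof -
  have r0: "run alg X ldr inR inQ 0 = ((\<lambda>u. mk False False (occ X u) (inR u) (inQ u) False), (\<lambda>u p. False))"
    by (simp add: alg_def occ_eta)
  have r1: "run alg X ldr inR inQ (Suc 0) = ((\<lambda>u. mk True False (occ X u) (inR u) (inQ u) False),
     received X 2 (\<lambda>u. lab1 (occ X u) ((inR u \<or> inQ u) \<and> \<not> occ X u 3))
                 (\<lambda>u. if inR u \<and> \<not> occ X u 3 \<and> noniso (occ X u) then {exlab (occ X u) (exitd (occ X u) 3)} else {}))"
    by (simp only: run.simps(2) r0) (simp add: alg_def dlt0 occ_mod)
  have main: "fst (run alg X ldr inR inQ (Suc (Suc (Suc 0)))) = (\<lambda>u. mk True True (occ X u) (inR u) (inQ u)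
     (received X 2 (\<lambda>u. lab2)
        (\<lambda>u. if noniso (occ X u) \<and> inQ u \<and> \<not> occ X u 3 \<and>
               received X 2 (\<lambda>u. lab1 (occ X u) ((inR u \<or> inQ u) \<and> \<not> occ X u 3))
                 (\<lambda>u. if inR u \<and> \<not> occ X u 3 \<and> noniso (occ X u) then {exlab (occ X u) (exitd (occ X u) 3)} else {})
                 u (entd (occ X u) 3, nl (entd (occ X u) 3))
             then {0} else {}) u (0, 0)
      \<or> (\<not> noniso (occ X u) \<and> inQ u)))"
    apply (subst run.simps(2))
    apply (subst run.simps(2))
    apply (simp only: r1)
    apply (simp add: alg_def dlt1 dlt2 occ_mod Let_def)
    done
  show ?thesis using main by (simp add: numeral_3_eq_3)
qed


lemma noniso_I: "d < 6 \<Longrightarrow> oc d \<Longrightarrow> noniso oc"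
  unfolding noniso_def by (elim lt6[elim_format] disjE) simp_all

lemma single:
  assumes cX: "induced_connected X" and u: "u \<in> X" "\<not> noniso (occ X u)" and v: "v \<in> X"
  shows "v = u"
proof (rule ccontr)
  assume ne: "v \<noteq> u"
  have "(u, v) \<in> {(a, b). a \<in> X \<and> b \<in> X \<and> grid_adj a b}\<^sup>*" using cX u(1) v unfolding induced_connected_def by blast
  then have "u \<noteq> v \<longrightarrow> (\<exists>a. (u, a) \<in> {(a, b). a \<in> X \<and> b \<in> X \<and> grid_adj a b})"
    by (induction rule: converse_rtrancl_induct) auto
  then obtain a where "(u, a) \<in> {(a, b). a \<in> X \<and> b \<in> X \<and> grid_adj a b}" using ne by blast
  then have "a \<in> X" "grid_adj u a" by auto
  then obtain d where "d < 6" "a = nb u d" unfolding grid_adj_nb by blast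
  then have "occ X u d" using \<open>a \<in> X\<close> unfolding occ_def by simp
  then show False using noniso_I[OF \<open>d < 6\<close>] u(2) by blast
qed

definition K0 :: "node set \<Rightarrow> node set \<Rightarrow> node set set \<Rightarrow> node \<Rightarrow> bool" where
  "K0 X R Q u \<longleftrightarrow> (portal X u = R \<or> portal X u \<in> Q) \<and> \<not> occ X u 3"

lemma main_lemma:
  assumes finX: "finite X" and cX: "induced_connected X" and hf: "hole_free X"
    and RX: "R \<in> x_portals X" and QX: "Q \<subseteq> x_portals X" and Qne: "Q \<noteq> {}"
  shows "\<exists>R'\<in>Q. \<forall>u\<in>X.
    (received X 2 (\<lambda>u. lab2)
        (\<lambda>u. if noniso (occ X u) \<and> portal X u \<in> Q \<and> \<not> occ X u 3 \<and>
               received X 2 (\<lambda>u. lab1 (occ X u) ((portal X u = R \<or> portal X u \<in> Q) \<and> \<not> occ X u 3))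
                 (\<lambda>u. if portal X u = R \<and> \<not> occ X u 3 \<and> noniso (occ X u) then {exlab (occ X u) (exitd (occ X u) 3)} else {})
                 u (entd (occ X u) 3, nl (entd (occ X u) 3))
             then {0} else {}) u (0, 0)
      \<or> (\<not> noniso (occ X u) \<and> portal X u \<in> Q)) = (portal X u = R')"
  (is "\<exists>R'\<in>Q. \<forall>u\<in>X. ?B u = _")
proof (cases "\<exists>u\<in>X. \<not> noniso (occ X u)")
  case True
  then obtain u where u: "u \<in> X" "\<not> noniso (occ X u)" by blast
  have Xu: "X = {u}" using single[OF cX u] u(1) by blast
  have "Q \<subseteq> {portal X u}" using QX Xu unfolding x_portals_def by simp
  then have Q: "Q = {portal X u}" using Qne by blast
  show ?thesis
    by (rule bexI[of _ "portal X u"]) (use Q Xu u in auto)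
next
  case False
  then have nonisoX: "\<And>u. u \<in> X \<Longrightarrow> noniso (occ X u)" by blast
  define K where "K = K0 X R Q"
  have Kc: "\<And>u. K u \<Longrightarrow> \<not> occ X u 3" unfolding K_def K0_def by blast
  obtain r where r: "r \<in> X" "R = portal X r" using RX unfolding x_portals_def by blast
  obtain wR where wR: "wR \<in> X" "(r, wR) \<in> (x_edges X)\<^sup>*" "nb wR 3 \<notin> X" using west_end_ex[OF finX r(1)] by blast
  have pwR: "portal X wR = R" using portal_eq[OF wR(2)] r(2) by simp
  have KwR: "K wR" unfolding K_def K0_def occ_def using pwR wR(3) by simp
  have cE: "induced_connected (- X)" using hf unfolding hole_free_def .
  obtain k where k1: "\<forall>j<k. hoN X ((scN X K ^^ j) (outh X wR))" and k2: "\<not> hoN X ((scN X K ^^ k) (outh X wR))"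
    and k3: "\<forall>j\<le>k. (scN X K ^^ j) (outh X wR) \<in> X \<times> {..<72}"
    and k4: "\<forall>m. (outh X wR, m) \<in> (circ_edges X 2 (Lb X K))\<^sup>* \<longleftrightarrow> (\<exists>j\<le>k. m = (scN X K ^^ j) (outh X wR))"
    using walk_inst[where X=X and K=K and wR=wR, OF finX nonisoX Kc wR(1) KwR] by blast
  obtain vs where vs: "(scN X K ^^ k) (outh X wR) = inh X vs" "K vs" "vs \<in> X"
    using final_node[where X=X and K=K and wR=wR and k=k, OF finX nonisoX Kc wR(1) KwR k1 k2 k3 k4] by blast
  have west_uniq: "w = wR" if "w \<in> X" "nb w 3 \<notin> X" "portal X w = R" for w
    using west_end_uniq[OF that(1,2) wR(1) wR(3)] that(3) pwR by simp
  have vsQ: "portal X vs \<in> Q"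
  proof (rule ccontr)
    assume nQ: "portal X vs \<notin> Q"
    then have pR: "portal X vs = R" and o3: "\<not> occ X vs 3" using vs(2) unfolding K_def K0_def by auto
    have "vs = wR" using west_uniq[OF vs(3) _ pR] o3 unfolding occ_def by simp
    then have sk: "(scN X K ^^ k) (outh X wR) = inh X wR" using vs(1) by simp
    have allw: "\<forall>w\<in>X. K w \<longrightarrow> w = wR"
      using jordan_app[where X=X and K=K and wR=wR and k=k, OF finX nonisoX Kc wR(1) KwR k1 k2 k3 k4 sk cX cE] .
    obtain P where P: "P \<in> Q" using Qne by blast
    then obtain p where p: "p \<in> X" "P = portal X p" using QX unfolding x_portals_def by blast
    obtain w where w: "w \<in> X" "(p, w) \<in> (x_edges X)\<^sup>*" "nb w 3 \<notin> X" using west_end_ex[OF finX p(1)] by blast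
    have pw: "portal X w = P" using portal_eq[OF w(2)] p(2) by simp
    have "K w" unfolding K_def K0_def occ_def using pw P w(3) by simp
    then have "w = wR" using allw w(1) by blast
    then have "P = R" using pw pwR by simp
    then show False using P nQ pR by simp
  qed
  let ?E = "circ_edges X 2 (Lb X K)"
  let ?bp1 = "\<lambda>u. if portal X u = R \<and> \<not> occ X u 3 \<and> noniso (occ X u) then {exlab (occ X u) (exitd (occ X u) 3)} else {}"
  have lbeq: "(\<lambda>u. lab1 (occ X u) ((portal X u = R \<or> portal X u \<in> Q) \<and> \<not> occ X u 3)) = Lb X K"
    unfolding Lb_def K_def K0_def by (rule ext)+ simp
  have gvR: "gv (occ X wR) (exitd (occ X wR) 3) \<and> exlab (occ X wR) (exitd (occ X wR) 3) = gl (entd (occ X wR) 3) (exitd (occ X wR) 3) 1"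
    using GVX Kc[OF KwR] nonisoX[OF wR(1)] by blast
  have rec1: "received X 2 (Lb X K) ?bp1 u p \<longleftrightarrow> (outh X wR, (u, Lb X K u p)) \<in> ?E\<^sup>*" if u: "u \<in> X" for u p
  proof
    assume "received X 2 (Lb X K) ?bp1 u p"
    then obtain v d i where h: "v \<in> X" "d < 6" "i < 2" "Lb X K v (d, i) \<in> ?bp1 v"
      "((u, Lb X K u p), (v, Lb X K v (d, i))) \<in> ?E\<^sup>*" unfolding received_def by blast
    have c: "portal X v = R" "\<not> occ X v 3" using h(4) by (auto split: if_splits)
    then have "v = wR" using west_uniq[OF h(1)] unfolding occ_def by simp
    then have "(v, Lb X K v (d, i)) = outh X wR" using h(4) gvR unfolding outh_def by (auto split: if_splits)
    then show "(outh X wR, (u, Lb X K u p)) \<in> ?E\<^sup>*" using rtrancl_circ_sym h(5) by metis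
  next
    assume h: "(outh X wR, (u, Lb X K u p)) \<in> ?E\<^sup>*"
    define d where "d = exitd (occ X wR) 3"
    have lb: "Lb X K wR (d, xl d) = gl (entd (occ X wR) 3) (exitd (occ X wR) 3) 1"
      unfolding Lb_def d_def using lab1_exit gvR by simp
    have "Lb X K wR (d, xl d) \<in> ?bp1 wR" using lb pwR wR(3) nonisoX[OF wR(1)] gvR unfolding occ_def d_def by simp
    moreover have "((u, Lb X K u p), (wR, Lb X K wR (d, xl d))) \<in> ?E\<^sup>*"
      using rtrancl_circ_sym[OF h] lb unfolding outh_def by simp
    moreover have "d < 6" "xl d < 2" unfolding d_def using exitd_lt xl_lt by auto
    ultimately show "received X 2 (Lb X K) ?bp1 u p" unfolding received_def using wR(1) by blast
  qed
  have el: "(noniso (occ X u) \<and> portal X u \<in> Q \<and> \<not> occ X u 3 \<and>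
      received X 2 (Lb X K) ?bp1 u (entd (occ X u) 3, nl (entd (occ X u) 3))) \<longleftrightarrow> u = vs" if u: "u \<in> X" for u
  proof
    assume h: "noniso (occ X u) \<and> portal X u \<in> Q \<and> \<not> occ X u 3 \<and>
      received X 2 (Lb X K) ?bp1 u (entd (occ X u) 3, nl (entd (occ X u) 3))"
    have Ku: "K u" using h unfolding K_def K0_def by simp
    have ll: "ev (occ X u) (entd (occ X u) 3) \<and> exitd (occ X u) ((entd (occ X u) 3 + 1) mod 6) = exitd (occ X u) 3"
      using LL3 h by blast
    have "Lb X K u (entd (occ X u) 3, nl (entd (occ X u) 3)) = gl (entd (occ X u) 3) (exitd (occ X u) 3) 0"
      unfolding Lb_def using lab1_entry[of "occ X u" "entd (occ X u) 3" "K u"] ll Ku h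
      unfolding entlab_def iscut_def by simp
    then have "(outh X wR, inh X u) \<in> ?E\<^sup>*" using rec1[OF u] h unfolding inh_def by simp
    then have "inW X K wR k (inh X u)"
      using inW_iff[where X=X and K=K and wR=wR and k=k, OF finX nonisoX Kc wR(1) KwR k1 k2 k3 k4] by blast
    then have "inh X u = inh X vs" using Win[where X=X and K=K and wR=wR and k=k, OF finX nonisoX Kc wR(1) KwR k1 k2 k3 k4] vs(1) by simp
    then show "u = vs" unfolding inh_def by simp
  next
    assume uv: "u = vs"
    have Ku: "K u" and o3: "\<not> occ X u 3" using vs(2) uv Kc by auto
    have nu: "noniso (occ X u)" using nonisoX u by simp
    have ll: "ev (occ X u) (entd (occ X u) 3) \<and> exitd (occ X u) ((entd (occ X u) 3 + 1) mod 6) = exitd (occ X u) 3"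
      using LL3 o3 nu by blast
    have "Lb X K u (entd (occ X u) 3, nl (entd (occ X u) 3)) = gl (entd (occ X u) 3) (exitd (occ X u) 3) 0"
      unfolding Lb_def using lab1_entry[of "occ X u" "entd (occ X u) 3" "K u"] ll Ku o3
      unfolding entlab_def iscut_def by simp
    moreover have "(outh X wR, inh X u) \<in> ?E\<^sup>*"
    proof -
      have "\<exists>j\<le>k. inh X u = (scN X K ^^ j) (outh X wR)" using vs(1) uv by (intro exI[of _ k]) auto
      then show ?thesis using k4 by blast
    qed
    ultimately have "received X 2 (Lb X K) ?bp1 u (entd (occ X u) 3, nl (entd (occ X u) 3))"
      using rec1[OF u] unfolding inh_def by simp
    then show "noniso (occ X u) \<and> portal X u \<in> Q \<and> \<not> occ X u 3 \<and>
      received X 2 (Lb X K) ?bp1 u (entd (occ X u) 3, nl (entd (occ X u) 3))"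
      using nu o3 vsQ uv by simp
  qed
  let ?bp2 = "\<lambda>u. if noniso (occ X u) \<and> portal X u \<in> Q \<and> \<not> occ X u 3 \<and>
      received X 2 (Lb X K) ?bp1 u (entd (occ X u) 3, nl (entd (occ X u) 3)) then {0::nat} else {}"
  have bp2: "?bp2 v = (if v = vs then {0} else {})" if "v \<in> X" for v using el[OF that] by simp
  have rec2: "received X 2 (\<lambda>u. lab2) ?bp2 u (0, 0) \<longleftrightarrow> portal X u = portal X vs" if u: "u \<in> X" for u
  proof
    assume "received X 2 (\<lambda>u. lab2) ?bp2 u (0, 0)"
    then obtain v d i where h: "v \<in> X" "d < 6" "i < 2" "lab2 (d, i) \<in> ?bp2 v"
      "((u, lab2 (0, 0)), (v, lab2 (d, i))) \<in> (circ_edges X 2 (\<lambda>u. lab2))\<^sup>*" unfolding received_def by blast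
    have "v = vs" "lab2 (d, i) = 0" using h(4) bp2[OF h(1)] by (auto split: if_splits)
    then have "((vs, 0), (u, 0)) \<in> (circ_edges X 2 (\<lambda>u. lab2))\<^sup>*"
      using rtrancl_circ_sym[OF h(5)] unfolding lab2_def by simp
    then have "(vs, u) \<in> (x_edges X)\<^sup>*" using R2 by fastforce
    then show "portal X u = portal X vs" by (rule portal_eq)
  next
    assume "portal X u = portal X vs"
    moreover have "u \<in> portal X u" unfolding portal_def by simp
    ultimately have "(vs, u) \<in> (x_edges X)\<^sup>*" unfolding portal_def by simp
    then have "((vs, 0), (u, 0)) \<in> (circ_edges X 2 (\<lambda>u. lab2))\<^sup>*" using R2' by simp
    then have "((u, lab2 (0, 0)), (vs, lab2 (0, 0))) \<in> (circ_edges X 2 (\<lambda>u. lab2))\<^sup>*"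
      using rtrancl_circ_sym unfolding lab2_def by fastforce
    moreover have "lab2 (0, 0) \<in> ?bp2 vs" using bp2[OF vs(3)] unfolding lab2_def by simp
    ultimately show "received X 2 (\<lambda>u. lab2) ?bp2 u (0, 0)" unfolding received_def using vs(3)
      by (intro bexI[of _ vs] exI[of _ 0] exI[of _ 0]) auto
  qed
  show ?thesis
  proof (rule bexI[of _ "portal X vs"])
    show "portal X vs \<in> Q" by (rule vsQ)
    show "\<forall>u\<in>X. ?B u = (portal X u = portal X vs)"
    proof
      fix u assume u: "u \<in> X"
      show "?B u = (portal X u = portal X vs)"
        using rec2[OF u] nonisoX[OF u] unfolding lbeq by simp
    qed
  qed
qed

theorem mainTheorem15:
  shows "\<exists>A T. valid_algo A \<and>
    (\<forall>X R Q ldr.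
       finite X \<and> induced_connected X \<and> hole_free X \<and> ldr \<in> X \<and>
       R \<in> x_portals X \<and> Q \<subseteq> x_portals X \<and> Q \<noteq> {} \<longrightarrow>
       (\<exists>R'\<in>Q. \<forall>u\<in>X.
          out_fn A (fst (run A X ldr (\<lambda>u. portal X u = R) (\<lambda>u. portal X u \<in> Q) T) u)
            = (portal X u = R')))"
proof (intro exI[of _ alg] exI[of _ 3] conjI valid_alg allI impI)
  fix X R Q ldr
  assume H: "finite X \<and> induced_connected X \<and> hole_free X \<and> ldr \<in> X \<and>
       R \<in> x_portals X \<and> Q \<subseteq> x_portals X \<and> Q \<noteq> {}"
  have of: "out_fn alg = Fb" unfolding alg_def by simp
  show "\<exists>R'\<in>Q. \<forall>u\<in>X.
          out_fn alg (fst (run alg X ldr (\<lambda>u. portal X u = R) (\<lambda>u. portal X u \<in> Q) 3) u)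
            = (portal X u = R')"
    unfolding of run3 using main_lemma[of X R Q] H by (simp add: mk_dec)
qed


end
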